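(* Let $M$ be a transitive monoid of binary relations on a finite nonempty set $Q$. Then the set $K$ of elements of $M$ of rank $r(M)$ is a regular $\mathcal D$-class of $M$. The groups $G_e$, for $e$ an idempotent in $K$, are equivalent transitive permutation groups. Moreover, for an idempotent $e\in K$ and a fixed point $i$ of $e$, $r(M)$ equals the index in $H(e)$ of the subgroup $\{m\in H(e)\mid (i,i)\in m\}$.
   Context: Monoid of relations: set of relations on $Q$ containing the identity and closed under composition $mn=\{(p,q)\mid\exists r,(p,r)\in m,(r,q)\in n\}$. It is transitive if for all $p,q\in Q$ some $m\in M$ has $(p,q)\in m$. The rank of a relation $m$ on $Q$ is the least cardinality of a set $R$ such that $m=uv$ with $u\subseteq Q\times R$, $v\subseteq R\times Q$ (Boolean rank). The minimal rank $r(M)$ is the minimum rank of the nonempty elements of $M$. A $\mathcal D$-class is regular if it contains an idempotent. For an idempotent $e$, $H(e)$ is its $\mathcal H$-class (a group, inverses $m^{-1}$), $\Gamma_e$ the set of strongly connected components of the restriction of $e$ to its fixed points $\{q\mid (q,q)\in e\}$, $\gamma_e(m)=\{(\rho,\sigma)\in\Gamma_e^2\mid (r,s)\in m,(s,r)\in m^{-1}\text{ for some }r\in\rho,s\in\sigma\}$ for $m\in H(e)$, and $G_e=\gamma_e(H(e))$, a permutation group on $\Gamma_e$. Permutation groups $G$ on $S$ and $G'$ on $S'$ are equivalent if there exist a bijection $\theta:S\to S'$ and an isomorphism $\alpha:G\to G'$ with $\theta(g(s))=\alpha(g)(\theta(s))$. *)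

theory Defs
  imports Main
begin

text \<open>Relations on Q are sets of pairs; the product mn of the paper is relcomp (m O n).\<close>

definition rel_monoid :: "'a set \<Rightarrow> ('a \<times> 'a) set set \<Rightarrow> bool" where
  "rel_monoid Q M \<longleftrightarrow> (\<forall>m\<in>M. m \<subseteq> Q \<times> Q) \<and> Id_on Q \<in> M \<and>
     (\<forall>m\<in>M. \<forall>n\<in>M. m O n \<in> M)"

definition transitive_rel_monoid :: "'a set \<Rightarrow> ('a \<times> 'a) set set \<Rightarrow> bool" where
  "transitive_rel_monoid Q M \<longleftrightarrow> (\<forall>p\<in>Q. \<forall>q\<in>Q. \<exists>m\<in>M. (p, q) \<in> m)"

text \<open>Boolean rank: least cardinality of R with m = u v, u \<subseteq> Q \<times> R, v \<subseteq> R \<times> Q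
  (R taken, w.l.o.g. up to bijection, as {..<n}).\<close>
definition rel_rank :: "'a set \<Rightarrow> ('a \<times> 'a) set \<Rightarrow> nat" where
  "rel_rank Q m = (LEAST n. \<exists>(u :: ('a \<times> nat) set) (v :: (nat \<times> 'a) set).
      u \<subseteq> Q \<times> {..<n} \<and> v \<subseteq> {..<n} \<times> Q \<and> m = u O v)"

definition min_rank :: "'a set \<Rightarrow> ('a \<times> 'a) set set \<Rightarrow> nat" where
  "min_rank Q M = Min {rel_rank Q m | m. m \<in> M \<and> m \<noteq> {}}"

definition greenR :: "('a \<times> 'a) set set \<Rightarrow> ('a \<times> 'a) set \<Rightarrow> ('a \<times> 'a) set \<Rightarrow> bool" where
  "greenR M m n \<longleftrightarrow> (\<exists>x\<in>M. m = n O x) \<and> (\<exists>y\<in>M. n = m O y)"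

definition greenL :: "('a \<times> 'a) set set \<Rightarrow> ('a \<times> 'a) set \<Rightarrow> ('a \<times> 'a) set \<Rightarrow> bool" where
  "greenL M m n \<longleftrightarrow> (\<exists>x\<in>M. m = x O n) \<and> (\<exists>y\<in>M. n = y O m)"

definition greenD :: "('a \<times> 'a) set set \<Rightarrow> ('a \<times> 'a) set \<Rightarrow> ('a \<times> 'a) set \<Rightarrow> bool" where
  "greenD M m n \<longleftrightarrow> (\<exists>k\<in>M. greenR M m k \<and> greenL M k n)"

definition Dclass :: "('a \<times> 'a) set set \<Rightarrow> ('a \<times> 'a) set \<Rightarrow> ('a \<times> 'a) set set" where
  "Dclass M m = {n \<in> M. greenD M m n}"

definition Hclass :: "('a \<times> 'a) set set \<Rightarrow> ('a \<times> 'a) set \<Rightarrow> ('a \<times> 'a) set set" where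
  "Hclass M e = {m \<in> M. greenR M m e \<and> greenL M m e}"

definition idempotent :: "('a \<times> 'a) set \<Rightarrow> bool" where
  "idempotent e \<longleftrightarrow> e O e = e"

definition hinv :: "('a \<times> 'a) set set \<Rightarrow> ('a \<times> 'a) set \<Rightarrow> ('a \<times> 'a) set \<Rightarrow> ('a \<times> 'a) set" where
  "hinv M e m = (THE n. n \<in> Hclass M e \<and> m O n = e \<and> n O m = e)"

definition fixpts :: "'a set \<Rightarrow> ('a \<times> 'a) set \<Rightarrow> 'a set" where
  "fixpts Q e = {q \<in> Q. (q, q) \<in> e}"

definition Gamma :: "'a set \<Rightarrow> ('a \<times> 'a) set \<Rightarrow> 'a set set" where
  "Gamma Q e = (let F = fixpts Q e; R = e \<inter> (F \<times> F) in
     F // {(p, q). (p, q) \<in> R\<^sup>* \<and> (q, p) \<in> R\<^sup>*})"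

definition gamma :: "'a set \<Rightarrow> ('a \<times> 'a) set set \<Rightarrow> ('a \<times> 'a) set \<Rightarrow> ('a \<times> 'a) set
    \<Rightarrow> ('a set \<times> 'a set) set" where
  "gamma Q M e m = {(\<rho>, \<sigma>). \<rho> \<in> Gamma Q e \<and> \<sigma> \<in> Gamma Q e \<and>
      (\<exists>r\<in>\<rho>. \<exists>s\<in>\<sigma>. (r, s) \<in> m \<and> (s, r) \<in> hinv M e m)}"

definition Ggrp :: "'a set \<Rightarrow> ('a \<times> 'a) set set \<Rightarrow> ('a \<times> 'a) set \<Rightarrow> ('a set \<times> 'a set) set set" where
  "Ggrp Q M e = gamma Q M e ` Hclass M e"

text \<open>Permutations of S represented by their graphs; a permutation group is a nonempty
  set of such graphs closed under composition and inverse.\<close>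
definition perm_rel :: "'b set \<Rightarrow> ('b \<times> 'b) set \<Rightarrow> bool" where
  "perm_rel S g \<longleftrightarrow> g \<subseteq> S \<times> S \<and> (\<forall>x\<in>S. \<exists>!y. (x, y) \<in> g) \<and> (\<forall>y\<in>S. \<exists>!x. (x, y) \<in> g)"

definition perm_group_rel :: "'b set \<Rightarrow> ('b \<times> 'b) set set \<Rightarrow> bool" where
  "perm_group_rel S G \<longleftrightarrow> G \<noteq> {} \<and> (\<forall>g\<in>G. perm_rel S g) \<and>
     (\<forall>g\<in>G. \<forall>h\<in>G. g O h \<in> G) \<and> (\<forall>g\<in>G. converse g \<in> G)"

definition transitive_perm_group :: "'b set \<Rightarrow> ('b \<times> 'b) set set \<Rightarrow> bool" where
  "transitive_perm_group S G \<longleftrightarrow> perm_group_rel S G \<and> (\<forall>s\<in>S. \<forall>t\<in>S. \<exists>g\<in>G. (s, t) \<in> g)"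

definition equivalent_perm_groups :: "'b set \<Rightarrow> ('b \<times> 'b) set set \<Rightarrow> 'c set \<Rightarrow> ('c \<times> 'c) set set \<Rightarrow> bool" where
  "equivalent_perm_groups S G S' G' \<longleftrightarrow>
     (\<exists>\<theta> \<alpha>. bij_betw \<theta> S S' \<and> bij_betw \<alpha> G G' \<and>
        (\<forall>g\<in>G. \<forall>h\<in>G. \<alpha> (g O h) = \<alpha> g O \<alpha> h) \<and>
        (\<forall>g\<in>G. \<forall>s\<in>S. \<forall>t\<in>S. (s, t) \<in> g \<longleftrightarrow> (\<theta> s, \<theta> t) \<in> \<alpha> g))"

definition grp_index :: "('a \<times> 'a) set set \<Rightarrow> ('a \<times> 'a) set set \<Rightarrow> nat" where
  "grp_index H S = card ((\<lambda>m. (\<lambda>s. s O m) ` S) ` H)"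

end

theory Submission
  imports Defs
begin

lemma relpow_idem: "e O e = e \<Longrightarrow> e ^^ Suc n = e"
  by (induction n) auto

lemma path_seg:
  assumes "\<forall>i<n. (g i, g (Suc i)) \<in> e"
  shows "a \<le> b \<Longrightarrow> b \<le> n \<Longrightarrow> (g a, g b) \<in> e ^^ (b - a)"
proof (induction b)
  case 0 then show ?case by simp
next
  case (Suc b)
  show ?case
  proof (cases "a = Suc b")
    case True then show ?thesis by simp
  next
    case False
    then have "a \<le> b" using Suc.prems by simp
    then have "(g a, g b) \<in> e ^^ (b - a)" using Suc by simp
    moreover have "(g b, g (Suc b)) \<in> e" using assms Suc.prems by simp
    ultimately have "(g a, g (Suc b)) \<in> e ^^ Suc (b - a)" by (rule relpow_Suc_I)
    moreover have "Suc (b - a) = Suc b - a" using \<open>a \<le> b\<close> by simp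
    ultimately show ?thesis by simp
  qed
qed

lemma idem_fix:
  assumes fin: "finite X" and sub: "e \<subseteq> X \<times> X" and idem: "e O e = e" and pq: "(p,q) \<in> e"
  shows "\<exists>f. (f,f) \<in> e \<and> (p,f) \<in> e \<and> (f,q) \<in> e"
proof -
  define n where "n = Suc (card X)"
  have "(p,q) \<in> e ^^ n" using relpow_idem[OF idem] pq n_def by simp
  then obtain g where g0: "g 0 = p" and gn: "g n = q" and ge: "\<forall>i<n. (g i, g (Suc i)) \<in> e"
    by (auto simp: relpow_fun_conv)
  have gX: "g ` {0..card X} \<subseteq> X"
  proof
    fix y assume "y \<in> g ` {0..card X}"
    then obtain i where "i \<le> card X" "y = g i" by auto
    then have "(g i, g (Suc i)) \<in> e" using ge n_def by simp
    then show "y \<in> X" using sub \<open>y = g i\<close> by auto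
  qed
  have "\<not> inj_on g {0..card X}"
  proof
    assume "inj_on g {0..card X}"
    then have "card (g ` {0..card X}) = Suc (card X)" by (simp add: card_image)
    moreover have "card (g ` {0..card X}) \<le> card X" using gX fin by (simp add: card_mono)
    ultimately show False by simp
  qed
  then obtain i j where ij: "i \<in> {0..card X}" "j \<in> {0..card X}" "i \<noteq> j" "g i = g j"
    unfolding inj_on_def by blast
  then obtain a b where ab: "a < b" "b \<le> card X" "g a = g b"
    by (metis atLeastAtMost_iff linorder_neqE_nat)
  have seg: "\<And>a b. a \<le> b \<Longrightarrow> b \<le> n \<Longrightarrow> (g a, g b) \<in> e ^^ (b - a)"
    using path_seg[OF ge] by blast
  have pw: "\<And>k. k > 0 \<Longrightarrow> e ^^ k = e"
    using relpow_idem[OF idem] by (metis gr0_implies_Suc)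
  have ff: "(g a, g a) \<in> e"
    using seg[of a b] ab pw[of "b - a"] n_def by simp
  have pf: "(p, g a) \<in> e"
  proof (cases "a = 0")
    case True then show ?thesis using ff g0 by simp
  next
    case False then show ?thesis using seg[of 0 a] ab pw[of a] n_def g0 by simp
  qed
  have fq: "(g a, q) \<in> e"
    using seg[of b n] ab pw[of "n - b"] n_def gn by simp
  show ?thesis using ff pf fq by blast
qed

definition clsof :: "('b \<times> 'b) set \<Rightarrow> 'b \<Rightarrow> 'b set" where
  "clsof A p = {q. (q,q) \<in> A \<and> (p,q) \<in> A \<and> (q,p) \<in> A}"

lemma rtr_char:
  assumes tr: "A O A \<subseteq> A" and pF: "p \<in> F"
  shows "(p,q) \<in> (A \<inter> F \<times> F)\<^sup>* \<longleftrightarrow> p = q \<or> ((p,q) \<in> A \<and> q \<in> F)"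
proof
  assume "(p,q) \<in> (A \<inter> F \<times> F)\<^sup>*"
  then show "p = q \<or> ((p,q) \<in> A \<and> q \<in> F)"
  proof (induction rule: rtrancl_induct)
    case base then show ?case by simp
  next
    case (step y z) then show ?case using tr by blast
  qed
next
  assume "p = q \<or> ((p,q) \<in> A \<and> q \<in> F)"
  then show "(p,q) \<in> (A \<inter> F \<times> F)\<^sup>*" using pF by blast
qed

lemma Gamma_eq:
  assumes sub: "A \<subseteq> X \<times> X" and tr: "A O A \<subseteq> A"
  shows "Gamma X A = clsof A ` fixpts X A"
proof -
  let ?F = "fixpts X A"
  let ?E = "{(p, q). (p, q) \<in> (A \<inter> ?F \<times> ?F)\<^sup>* \<and> (q, p) \<in> (A \<inter> ?F \<times> ?F)\<^sup>*}"
  have eq: "?E `` {p} = clsof A p" if pF: "p \<in> ?F" for p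
  proof -
    have "?E `` {p} = {q. (p = q \<or> ((p,q) \<in> A \<and> q \<in> ?F)) \<and> (q = p \<or> ((q,p) \<in> A \<and> p \<in> ?F))}"
      using rtr_char[OF tr pF] rtr_char[OF tr] by auto
    also have "\<dots> = clsof A p" using pF sub unfolding clsof_def fixpts_def by auto
    finally show ?thesis .
  qed
  have "Gamma X A = ?F // ?E" unfolding Gamma_def Let_def by simp
  also have "\<dots> = (\<lambda>p. ?E `` {p}) ` ?F" unfolding quotient_def by auto
  also have "\<dots> = clsof A ` ?F" using eq by (auto simp: image_def)
  finally show ?thesis .
qed

lemma clsof_self: "(p,p) \<in> A \<Longrightarrow> p \<in> clsof A p"
  unfolding clsof_def by auto

lemma clsof_mem_pair: "A O A \<subseteq> A \<Longrightarrow> f \<in> clsof A p \<Longrightarrow> g \<in> clsof A p \<Longrightarrow> (f,g) \<in> A"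
  unfolding clsof_def by blast

lemma clsof_eq: "A O A \<subseteq> A \<Longrightarrow> q \<in> clsof A p \<Longrightarrow> clsof A q = clsof A p"
  unfolding clsof_def by blast

lemma clsof_eqI: "A O A \<subseteq> A \<Longrightarrow> (p,p) \<in> A \<Longrightarrow> (q,q) \<in> A \<Longrightarrow> (p,q) \<in> A \<Longrightarrow> (q,p) \<in> A
   \<Longrightarrow> clsof A q = clsof A p"
  unfolding clsof_def by blast

lemma Gamma_props:
  assumes sub: "A \<subseteq> X \<times> X" and tr: "A O A \<subseteq> A" and rho: "\<rho> \<in> Gamma X A"
  shows "\<rho> \<noteq> {}" "\<rho> \<subseteq> X" "\<And>f. f \<in> \<rho> \<Longrightarrow> (f,f) \<in> A" "\<And>f. f \<in> \<rho> \<Longrightarrow> clsof A f = \<rho>"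
    "\<And>f g. f \<in> \<rho> \<Longrightarrow> g \<in> \<rho> \<Longrightarrow> (f,g) \<in> A"
proof -
  obtain p where p: "p \<in> fixpts X A" "\<rho> = clsof A p" using rho Gamma_eq[OF sub tr] by auto
  show "\<rho> \<noteq> {}" using p clsof_self[of p A] unfolding fixpts_def by auto
  show "\<rho> \<subseteq> X" using p sub unfolding clsof_def by auto
  show "\<And>f. f \<in> \<rho> \<Longrightarrow> (f,f) \<in> A" using p unfolding clsof_def by auto
  show "\<And>f. f \<in> \<rho> \<Longrightarrow> clsof A f = \<rho>" using p clsof_eq[OF tr] by auto
  show "\<And>f g. f \<in> \<rho> \<Longrightarrow> g \<in> \<rho> \<Longrightarrow> (f,g) \<in> A" using p clsof_mem_pair[OF tr] by auto
qed

lemma Gamma_memI: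
  assumes sub: "A \<subseteq> X \<times> X" and tr: "A O A \<subseteq> A" and "(f,f) \<in> A"
  shows "clsof A f \<in> Gamma X A"
  using assms Gamma_eq[OF sub tr] unfolding fixpts_def by auto

lemma Gamma_finite: "finite X \<Longrightarrow> A \<subseteq> X \<times> X \<Longrightarrow> A O A \<subseteq> A \<Longrightarrow> finite (Gamma X A)"
  using Gamma_eq[of A X] unfolding fixpts_def by auto

definition cdec :: "'b set \<Rightarrow> ('b \<times> 'b) set \<Rightarrow> ('b \<times> 'b set) set" where
  "cdec X A = {(p,\<rho>). \<rho> \<in> Gamma X A \<and> (\<exists>f\<in>\<rho>. (p,f) \<in> A)}"
definition ldec :: "'b set \<Rightarrow> ('b \<times> 'b) set \<Rightarrow> ('b set \<times> 'b) set" where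
  "ldec X A = {(\<rho>,q). \<rho> \<in> Gamma X A \<and> (\<exists>f\<in>\<rho>. (f,q) \<in> A)}"

lemma dec_rep:
  assumes sub: "A \<subseteq> X \<times> X" and tr: "A O A \<subseteq> A" and rho: "\<rho> \<in> Gamma X A" and f: "f \<in> \<rho>"
  shows "(p,\<rho>) \<in> cdec X A \<longleftrightarrow> (p,f) \<in> A" "(\<rho>,q) \<in> ldec X A \<longleftrightarrow> (f,q) \<in> A"
proof -
  note G = Gamma_props[OF sub tr rho]
  show "(p,\<rho>) \<in> cdec X A \<longleftrightarrow> (p,f) \<in> A"
    using rho f G(5) tr unfolding cdec_def by blast
  show "(\<rho>,q) \<in> ldec X A \<longleftrightarrow> (f,q) \<in> A"
    using rho f G(5) tr unfolding ldec_def by blast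
qed

lemma dec_sub:
  assumes sub: "A \<subseteq> X \<times> X"
  shows "cdec X A \<subseteq> X \<times> Gamma X A" "ldec X A \<subseteq> Gamma X A \<times> X"
  using sub unfolding cdec_def ldec_def by auto

lemma dec_eq:
  assumes fin: "finite X" and sub: "A \<subseteq> X \<times> X" and idem: "A O A = A"
  shows "A = cdec X A O ldec X A"
proof
  have tr: "A O A \<subseteq> A" using idem by simp
  show "A \<subseteq> cdec X A O ldec X A"
  proof
    fix x assume "x \<in> A"
    then obtain p q where x: "x = (p,q)" "(p,q) \<in> A" by (cases x) auto
    then obtain f where f: "(f,f) \<in> A" "(p,f) \<in> A" "(f,q) \<in> A" using idem_fix[OF fin sub idem] by blast
    have "clsof A f \<in> Gamma X A" using Gamma_memI[OF sub tr f(1)] .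
    moreover have "f \<in> clsof A f" using clsof_self[OF f(1)] .
    ultimately show "x \<in> cdec X A O ldec X A" using f x unfolding cdec_def ldec_def by blast
  qed
next
  show "cdec X A O ldec X A \<subseteq> A"
  proof
    fix x assume "x \<in> cdec X A O ldec X A"
    then obtain p q \<rho> f g where x: "x = (p,q)" "\<rho> \<in> Gamma X A" "f \<in> \<rho>" "g \<in> \<rho>" "(p,f) \<in> A" "(g,q) \<in> A"
      unfolding cdec_def ldec_def by blast
    have "(f,g) \<in> A" using Gamma_props(5)[OF sub _ x(2) x(3) x(4)] idem by simp
    then show "x \<in> A" using x idem by blast
  qed
qed

lemma fooling:
  assumes sub: "A \<subseteq> X \<times> X" and tr: "A O A \<subseteq> A" and eq: "A = u O v" and uY: "u \<subseteq> X \<times> Y"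
    and finY: "finite Y"
  shows "card (Gamma X A) \<le> card Y"
proof -
  define rep where "rep \<rho> = (SOME f. f \<in> \<rho>)" for \<rho> :: "'a set"
  have rep: "rep \<rho> \<in> \<rho>" if "\<rho> \<in> Gamma X A" for \<rho>
    using Gamma_props(1)[OF sub tr that] unfolding rep_def by (simp add: some_in_eq)
  define h where "h \<rho> = (SOME y. (rep \<rho>, y) \<in> u \<and> (y, rep \<rho>) \<in> v)" for \<rho>
  have h: "(rep \<rho>, h \<rho>) \<in> u \<and> (h \<rho>, rep \<rho>) \<in> v" if "\<rho> \<in> Gamma X A" for \<rho>
  proof -
    have "(rep \<rho>, rep \<rho>) \<in> u O v" using Gamma_props(3)[OF sub tr that rep[OF that]] eq by simp
    then have "\<exists>y. (rep \<rho>, y) \<in> u \<and> (y, rep \<rho>) \<in> v" by blast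
    then show ?thesis unfolding h_def by (rule someI_ex)
  qed
  have "inj_on h (Gamma X A)"
  proof (rule inj_onI)
    fix \<rho> \<sigma> assume r: "\<rho> \<in> Gamma X A" and s: "\<sigma> \<in> Gamma X A" and hh: "h \<rho> = h \<sigma>"
    have "(rep \<rho>, rep \<sigma>) \<in> A" "(rep \<sigma>, rep \<rho>) \<in> A" using h[OF r] h[OF s] hh eq by auto
    then have "clsof A (rep \<sigma>) = clsof A (rep \<rho>)"
      using clsof_eqI[OF tr] Gamma_props(3)[OF sub tr r rep[OF r]] Gamma_props(3)[OF sub tr s rep[OF s]]
      by blast
    then show "\<rho> = \<sigma>" using Gamma_props(4)[OF sub tr r rep[OF r]] Gamma_props(4)[OF sub tr s rep[OF s]]
      by simp
  qed
  moreover have "h ` Gamma X A \<subseteq> Y" using h uY by blast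
  ultimately show ?thesis using card_inj_on_le finY by blast
qed

lemma reindex:
  assumes fin: "finite S" and u: "u \<subseteq> Q \<times> S" and v: "v \<subseteq> S \<times> Q"
  shows "\<exists>(u' :: ('a \<times> nat) set) (v' :: (nat \<times> 'a) set). u' \<subseteq> Q \<times> {..<card S} \<and> v' \<subseteq> {..<card S} \<times> Q \<and> u O v = u' O v'"
proof -
  obtain h where h: "bij_betw h S {0..<card S}" using ex_bij_betw_finite_nat[OF fin] by blast
  define u' where "u' = (\<lambda>(p,s). (p, h s)) ` u"
  define v' where "v' = (\<lambda>(s,q). (h s, q)) ` v"
  have inj: "inj_on h S" and im: "h ` S = {0..<card S}" using h by (auto simp: bij_betw_def)
  have "u' \<subseteq> Q \<times> {..<card S}" using u im unfolding u'_def by fastforce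
  moreover have "v' \<subseteq> {..<card S} \<times> Q" using v im unfolding v'_def by fastforce
  moreover have "u O v = u' O v'"
  proof
    show "u O v \<subseteq> u' O v'" unfolding u'_def v'_def by force
    show "u' O v' \<subseteq> u O v"
    proof
      fix x assume "x \<in> u' O v'"
      then obtain p s s' q where x: "x = (p,q)" "(p,s) \<in> u" "(s',q) \<in> v" "h s = h s'"
        unfolding u'_def v'_def by auto
      then have "s = s'" using inj u v by (auto dest: inj_onD)
      then show "x \<in> u O v" using x by auto
    qed
  qed
  ultimately show ?thesis by blast
qed

lemma rank_le:
  assumes "finite S" "u \<subseteq> Q \<times> S" "v \<subseteq> S \<times> Q" "m = u O v"
  shows "rel_rank Q m \<le> card S"
  unfolding rel_rank_def using reindex[OF assms(1-3)] assms(4) by (auto intro: Least_le)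

lemma rank_ex:
  assumes fin: "finite Q" and m: "m \<subseteq> Q \<times> Q"
  shows "\<exists>(u :: ('a \<times> nat) set) (v :: (nat \<times> 'a) set). u \<subseteq> Q \<times> {..<rel_rank Q m} \<and> v \<subseteq> {..<rel_rank Q m} \<times> Q \<and> m = u O v"
proof -
  have "m = m O Id_on Q" using m by auto
  then have "\<exists>n (u :: ('a \<times> nat) set) (v :: (nat \<times> 'a) set). u \<subseteq> Q \<times> {..<n} \<and> v \<subseteq> {..<n} \<times> Q \<and> m = u O v"
    using reindex[OF fin m, of "Id_on Q"] by auto
  then show ?thesis unfolding rel_rank_def by (rule LeastI_ex)
qed

lemma rank_empty: "rel_rank Q {} = 0"
  unfolding rel_rank_def by (rule Least_eq_0) auto

lemma rank_pos: "finite Q \<Longrightarrow> m \<subseteq> Q \<times> Q \<Longrightarrow> m \<noteq> {} \<Longrightarrow> rel_rank Q m > 0"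
  using rank_ex[of Q m] by (cases "rel_rank Q m") auto

lemma rank_comp1:
  assumes fin: "finite Q" "m \<subseteq> Q \<times> Q" "n \<subseteq> Q \<times> Q"
  shows "rel_rank Q (m O n) \<le> rel_rank Q m"
proof -
  obtain u v where uv: "u \<subseteq> Q \<times> {..<rel_rank Q m}" "v \<subseteq> {..<rel_rank Q m} \<times> Q" "m = u O v"
    using rank_ex[OF fin(1,2)] by blast
  have "v O n \<subseteq> {..<rel_rank Q m} \<times> Q" using uv(2) fin(3) by auto
  then show ?thesis using rank_le[of "{..<rel_rank Q m}" u Q "v O n" "m O n"] uv by (simp add: O_assoc)
qed

lemma rank_comp2:
  assumes fin: "finite Q" "m \<subseteq> Q \<times> Q" "n \<subseteq> Q \<times> Q"
  shows "rel_rank Q (m O n) \<le> rel_rank Q n"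
proof -
  obtain u v where uv: "u \<subseteq> Q \<times> {..<rel_rank Q n}" "v \<subseteq> {..<rel_rank Q n} \<times> Q" "n = u O v"
    using rank_ex[OF fin(1,3)] by blast
  have "m O u \<subseteq> Q \<times> {..<rel_rank Q n}" using uv(1) fin(2) by auto
  then show ?thesis using rank_le[of "{..<rel_rank Q n}" "m O u" Q v "m O n"] uv by (simp add: O_assoc)
qed

lemma idem_pow:
  assumes fin: "finite N" and cl: "\<And>A B. A \<in> N \<Longrightarrow> B \<in> N \<Longrightarrow> A O B \<in> N" and A: "A \<in> N"
  shows "\<exists>j>0. A ^^ j \<in> N \<and> A ^^ j O A ^^ j = A ^^ j"
proof -
  have inN: "A ^^ Suc k \<in> N" for k
  proof (induction k)
    case 0 then show ?case using A by simp
  next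
    case (Suc k) then show ?case using A cl by simp
  qed
  define pw where "pw k = A ^^ Suc k" for k
  have "\<not> inj pw"
  proof
    assume "inj pw"
    moreover have "range pw \<subseteq> N" using inN unfolding pw_def by auto
    then have "finite (range pw)" using fin finite_subset by blast
    ultimately show False using finite_imageD infinite_UNIV_nat by blast
  qed
  then obtain a b where ab: "a < b" "pw a = pw b" unfolding inj_def by (metis linorder_neqE_nat)
  define s where "s = Suc a"
  define p where "p = b - a"
  have p0: "p > 0" using ab p_def by simp
  have sp: "A ^^ (s + p) = A ^^ s" using ab unfolding pw_def s_def p_def by simp
  have per: "A ^^ (t + p) = A ^^ t" if "t \<ge> s" for t
  proof -
    have "A ^^ (t + p) = A ^^ ((s + p) + (t - s))" using that by (simp add: algebra_simps)
    also have "\<dots> = A ^^ (s + p) O A ^^ (t - s)" by (rule relpow_add)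
    also have "\<dots> = A ^^ s O A ^^ (t - s)" using sp by simp
    also have "\<dots> = A ^^ (s + (t - s))" by (rule relpow_add[symmetric])
    also have "\<dots> = A ^^ t" using that by simp
    finally show ?thesis .
  qed
  have perq: "A ^^ (t + q * p) = A ^^ t" if "t \<ge> s" for t q
  proof (induction q)
    case 0 then show ?case by simp
  next
    case (Suc q)
    have "A ^^ (t + Suc q * p) = A ^^ ((t + q * p) + p)" by (simp add: algebra_simps)
    also have "\<dots> = A ^^ (t + q * p)" using per[of "t + q * p"] that by simp
    finally show ?case using Suc by simp
  qed
  define j where "j = s * p"
  have j0: "j > 0" using p0 unfolding j_def s_def by simp
  have js: "j \<ge> s" using p0 unfolding j_def by simp
  have "A ^^ j O A ^^ j = A ^^ (j + s * p)" by (simp add: relpow_add j_def)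
  also have "\<dots> = A ^^ j" using perq[OF js] .
  finally have "A ^^ j O A ^^ j = A ^^ j" .
  moreover have "A ^^ j \<in> N" using inN[of "j - 1"] j0 by simp
  ultimately show ?thesis using j0 by blast
qed

lemma card_Gamma_lt:
  assumes fin: "finite X" and sub: "A \<subseteq> X \<times> X" and tr: "A O A \<subseteq> A"
    and bad: "(\<exists>\<rho>\<in>X. (\<rho>,\<rho>) \<notin> A) \<or> (\<exists>\<rho> \<sigma>. \<rho> \<noteq> \<sigma> \<and> (\<rho>,\<sigma>) \<in> A \<and> (\<sigma>,\<rho>) \<in> A)"
  shows "card (Gamma X A) < card X"
proof -
  let ?F = "fixpts X A"
  have G: "Gamma X A = clsof A ` ?F" using Gamma_eq[OF sub tr] .
  have FX: "?F \<subseteq> X" unfolding fixpts_def by auto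
  from bad show ?thesis
  proof
    assume "\<exists>\<rho>\<in>X. (\<rho>,\<rho>) \<notin> A"
    then obtain \<rho> where "\<rho> \<in> X" "(\<rho>,\<rho>) \<notin> A" by blast
    then have "?F \<subseteq> X - {\<rho>}" unfolding fixpts_def by auto
    then have "card ?F \<le> card (X - {\<rho>})" using fin by (intro card_mono) auto
    also have "\<dots> < card X" using fin \<open>\<rho> \<in> X\<close> by (rule card_Diff1_less)
    finally have "card ?F < card X" .
    then show ?thesis using G card_image_le[of ?F "clsof A"] fin FX finite_subset by fastforce
  next
    assume "\<exists>\<rho> \<sigma>. \<rho> \<noteq> \<sigma> \<and> (\<rho>,\<sigma>) \<in> A \<and> (\<sigma>,\<rho>) \<in> A"
    then obtain \<rho> \<sigma> where rs: "\<rho> \<noteq> \<sigma>" "(\<rho>,\<sigma>) \<in> A" "(\<sigma>,\<rho>) \<in> A" by blast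
    have rr: "(\<rho>,\<rho>) \<in> A" "(\<sigma>,\<sigma>) \<in> A" using rs tr by blast+
    then have inF: "\<rho> \<in> ?F" "\<sigma> \<in> ?F" using sub unfolding fixpts_def by auto
    have "clsof A \<sigma> = clsof A \<rho>" using clsof_eqI[OF tr rr(1) rr(2) rs(2) rs(3)] .
    have "clsof A ` ?F = clsof A ` (?F - {\<sigma>})"
    proof
      show "clsof A ` ?F \<subseteq> clsof A ` (?F - {\<sigma>})"
      proof
        fix y assume "y \<in> clsof A ` ?F"
        then obtain x where x: "x \<in> ?F" "y = clsof A x" by blast
        show "y \<in> clsof A ` (?F - {\<sigma>})"
        proof (cases "x = \<sigma>")
          case True then have "y = clsof A \<rho>" using x \<open>clsof A \<sigma> = clsof A \<rho>\<close> by simp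
          then show ?thesis using inF rs(1) by blast
        next
          case False then show ?thesis using x by blast
        qed
      qed
    qed auto
    then have "card (Gamma X A) = card (clsof A ` (?F - {\<sigma>}))" using G by simp
    have finF: "finite ?F" using fin FX finite_subset by blast
    have "card (Gamma X A) = card (clsof A ` (?F - {\<sigma>}))" using G \<open>clsof A ` ?F = _\<close> by simp
    also have "\<dots> \<le> card (?F - {\<sigma>})" by (rule card_image_le) (simp add: finF)
    also have "\<dots> < card ?F" using finF inF(2) by (rule card_Diff1_less)
    also have "\<dots> \<le> card X" using fin FX by (rule card_mono)
    finally show ?thesis .
  qed
qed

lemma Id_on_comp: "A \<subseteq> S \<times> T \<Longrightarrow> A O Id_on T = A" "A \<subseteq> S \<times> T \<Longrightarrow> Id_on S O A = A"
  by auto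

lemma relpow_in:
  assumes cl: "\<And>A B. A \<in> N \<Longrightarrow> B \<in> N \<Longrightarrow> A O B \<in> N" and A: "A \<in> N"
  shows "A ^^ Suc k \<in> N"
proof (induction k)
  case 0 then show ?case using A by simp
next
  case (Suc k) then show ?case using A cl by simp
qed

lemma relpow_diag: "(x,x) \<in> C \<Longrightarrow> (x,x) \<in> C ^^ Suc k"
  by (induction k) (auto intro: relpow_Suc_I)

definition NN :: "('a \<times> 'a) set set \<Rightarrow> ('a \<times> 'b) set \<Rightarrow> ('b \<times> 'a) set \<Rightarrow> ('b \<times> 'b) set set" where
  "NN M c l = {l O x O c | x. x \<in> M}"

lemma inv_pair_conv:
  assumes A: "A \<subseteq> S \<times> T" and B: "B \<subseteq> T \<times> S" and AB: "A O B = Id_on S" and BA: "B O A = Id_on T"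
  shows "B = converse A"
proof
  show "B \<subseteq> converse A"
  proof
    fix z assume z: "z \<in> B"
    then obtain b a where ba: "z = (b,a)" "(b,a) \<in> B" "b \<in> T" using B by auto
    then have "(b,b) \<in> B O A" using BA by auto
    then obtain a' where a': "(b,a') \<in> B" "(a',b) \<in> A" by blast
    then have "(a',a) \<in> A O B" using ba by blast
    then have "a' = a" using AB by auto
    then show "z \<in> converse A" using a' ba by auto
  qed
  show "converse A \<subseteq> B"
  proof
    fix z assume z: "z \<in> converse A"
    then obtain b a where ba: "z = (b,a)" "(a,b) \<in> A" "a \<in> S" using A by auto
    then have "(a,a) \<in> A O B" using AB by auto
    then obtain b' where b': "(a,b') \<in> A" "(b',a) \<in> B" by blast
    then have "(b',b) \<in> B O A" using ba by blast
    then have "b' = b" using BA by auto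
    then show "z \<in> B" using b' ba by auto
  qed
qed

lemma inv_pair_perm:
  assumes A: "A \<subseteq> S \<times> S" and B: "B \<subseteq> S \<times> S" and AB: "A O B = Id_on S" and BA: "B O A = Id_on S"
  shows "perm_rel S A"
proof -
  have Bc: "B = converse A" using inv_pair_conv[OF A B AB BA] .
  have ex1: "\<exists>!y. (x,y) \<in> A" if "x \<in> S" for x
  proof -
    from that have "(x,x) \<in> A O B" using AB by auto
    then obtain y where y: "(x,y) \<in> A" by blast
    moreover have "y' = y" if "(x,y') \<in> A" for y'
    proof -
      have "(y',x) \<in> B" using Bc that by auto
      then have "(y',y) \<in> B O A" using y by blast
      then show ?thesis using BA by auto
    qed
    ultimately show ?thesis by blast
  qed
  have ex2: "\<exists>!x. (x,y) \<in> A" if "y \<in> S" for y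
  proof -
    from that have "(y,y) \<in> B O A" using BA by auto
    then obtain x where x: "(x,y) \<in> A" using Bc by blast
    moreover have "x' = x" if "(x',y) \<in> A" for x'
    proof -
      have "(y,x) \<in> B" using Bc x by auto
      then have "(x',x) \<in> A O B" using that by blast
      then show ?thesis using AB by auto
    qed
    ultimately show ?thesis by blast
  qed
  show ?thesis unfolding perm_rel_def using A ex1 ex2 by blast
qed

definition TT :: "'a set \<Rightarrow> ('a \<times> 'a) set \<Rightarrow> ('a \<times> 'a) set \<Rightarrow> ('a set \<times> 'a set) set" where
  "TT Q e m = ldec Q e O m O cdec Q e"

lemma card_image_kernel_le:
  assumes fin: "finite A" and ker: "\<And>x y. x \<in> A \<Longrightarrow> y \<in> A \<Longrightarrow> f x = f y \<longleftrightarrow> g x = g y"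
  shows "card (f ` A) \<le> card (g ` A)"
proof -
  have "f ` A = (\<lambda>z. f (inv_into A g z)) ` (g ` A)"
  proof
    show "f ` A \<subseteq> (\<lambda>z. f (inv_into A g z)) ` (g ` A)"
    proof
      fix w assume "w \<in> f ` A"
      then obtain x where x: "x \<in> A" "w = f x" by blast
      have "inv_into A g (g x) \<in> A" "g (inv_into A g (g x)) = g x"
        using x by (auto intro: inv_into_into f_inv_into_f)
      then have "f (inv_into A g (g x)) = f x" using ker x by blast
      then show "w \<in> (\<lambda>z. f (inv_into A g z)) ` (g ` A)" using x by force
    qed
    show "(\<lambda>z. f (inv_into A g z)) ` (g ` A) \<subseteq> f ` A"
      by (auto intro: inv_into_into)
  qed
  then show ?thesis using fin by (simp add: card_image_le)
qed

lemma card_image_kernel: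
  assumes fin: "finite A" and ker: "\<And>x y. x \<in> A \<Longrightarrow> y \<in> A \<Longrightarrow> f x = f y \<longleftrightarrow> g x = g y"
  shows "card (f ` A) = card (g ` A)"
proof (rule antisym)
  show "card (f ` A) \<le> card (g ` A)" using card_image_kernel_le[OF fin ker] .
  show "card (g ` A) \<le> card (f ` A)" using card_image_kernel_le[OF fin, of g f] ker by blast
qed

lemma bij_from_pair:
  assumes A: "A \<subseteq> S \<times> T" and B: "B \<subseteq> T \<times> S" and AB: "A O B = Id_on S" and BA: "B O A = Id_on T"
  shows "bij_betw (\<lambda>s. THE t. (s,t) \<in> A) S T" "\<And>s t. s \<in> S \<Longrightarrow> (s,t) \<in> A \<longleftrightarrow> t = (THE t. (s,t) \<in> A)"
proof -
  have Bc: "B = converse A" using inv_pair_conv[OF A B AB BA] .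
  have ex1: "\<exists>!t. (s,t) \<in> A" if "s \<in> S" for s
  proof -
    from that have "(s,s) \<in> A O B" using AB by auto
    then obtain t where t: "(s,t) \<in> A" by blast
    moreover have "t' = t" if "(s,t') \<in> A" for t'
    proof -
      have "(t',s) \<in> B" using Bc that by auto
      then have "(t',t) \<in> B O A" using t by blast
      then show ?thesis using BA by auto
    qed
    ultimately show ?thesis by blast
  qed
  show ch: "\<And>s t. s \<in> S \<Longrightarrow> (s,t) \<in> A \<longleftrightarrow> t = (THE t. (s,t) \<in> A)"
  proof -
    fix s t assume s: "s \<in> S"
    obtain t0 where t0: "(s,t0) \<in> A" "\<And>t'. (s,t') \<in> A \<Longrightarrow> t' = t0" using ex1[OF s] by blast
    have th: "(THE t. (s,t) \<in> A) = t0" using t0 by (rule the_equality)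
    show "(s,t) \<in> A \<longleftrightarrow> t = (THE t. (s,t) \<in> A)"
    proof
      assume "(s,t) \<in> A"
      then have "t = t0" by (rule t0(2))
      then show "t = (THE t. (s,t) \<in> A)" using th by simp
    next
      assume "t = (THE t. (s,t) \<in> A)"
      then have "t = t0" using th by simp
      then show "(s,t) \<in> A" using t0(1) by simp
    qed
  qed
  define th where "th = (\<lambda>s. THE t. (s,t) \<in> A)"
  have th1: "(s, th s) \<in> A" if "s \<in> S" for s using ch[OF that, of "th s"] unfolding th_def by blast
  have th2: "t = th s" if "s \<in> S" "(s,t) \<in> A" for s t using ch[OF that(1), of t] that(2) unfolding th_def by blast
  have "bij_betw th S T"
    unfolding bij_betw_def
  proof
    show "inj_on th S"
    proof (rule inj_onI)
      fix s s' assume s: "s \<in> S" "s' \<in> S" and eq: "th s = th s'"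
      have "(s,th s) \<in> A" using th1 s by blast
      moreover have "(s',th s) \<in> A" using th1[OF s(2)] eq by simp
      ultimately have "(s,th s) \<in> A" "(s',th s) \<in> A" by auto
      then have "(s,s') \<in> A O B" using Bc by blast
      then show "s = s'" using AB by auto
    qed
    show "th ` S = T"
    proof
      show "th ` S \<subseteq> T" using th1 A by blast
      show "T \<subseteq> th ` S"
      proof
        fix t assume "t \<in> T"
        then have "(t,t) \<in> B O A" using BA by auto
        then obtain s where "(t,s) \<in> B" "(s,t) \<in> A" by blast
        then have "s \<in> S" "t = th s" using th2 A by auto
        then show "t \<in> th ` S" by blast
      qed
    qed
  qed
  then show "bij_betw (\<lambda>s. THE t. (s,t) \<in> A) S T" unfolding th_def .
qed

locale tmon =
  fixes Q :: "'a set" and M :: "('a \<times> 'a) set set"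
  assumes finQ: "finite Q" and neQ: "Q \<noteq> {}" and mon: "rel_monoid Q M"
    and trm: "transitive_rel_monoid Q M"
begin

definition KK where "KK = {m \<in> M. rel_rank Q m = min_rank Q M}"

lemma subM: "m \<in> M \<Longrightarrow> m \<subseteq> Q \<times> Q" using mon unfolding rel_monoid_def by blast
lemma IdM: "Id_on Q \<in> M" using mon unfolding rel_monoid_def by blast
lemma compM: "m \<in> M \<Longrightarrow> n \<in> M \<Longrightarrow> m O n \<in> M" using mon unfolding rel_monoid_def by blast
lemma trans_ex: "p \<in> Q \<Longrightarrow> q \<in> Q \<Longrightarrow> \<exists>x\<in>M. (p,q) \<in> x"
  using trm unfolding transitive_rel_monoid_def by blast
lemma finM: "finite M"
proof -
  have "M \<subseteq> Pow (Q \<times> Q)" using subM by blast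
  then show ?thesis using finQ by (meson finite_Pow_iff finite_SigmaI finite_subset)
qed

lemma RS_fin: "finite {rel_rank Q m |m. m \<in> M \<and> m \<noteq> {}}"
  using finM by (intro finite_image_set) simp

lemma RS_ne: "{rel_rank Q m |m. m \<in> M \<and> m \<noteq> {}} \<noteq> {}"
  using IdM neQ by blast

lemma r_min: "m \<in> M \<Longrightarrow> m \<noteq> {} \<Longrightarrow> min_rank Q M \<le> rel_rank Q m"
  unfolding min_rank_def using RS_fin by (intro Min_le) auto

lemma r_ex: "\<exists>m\<in>M. m \<noteq> {} \<and> rel_rank Q m = min_rank Q M"
proof -
  have "min_rank Q M \<in> {rel_rank Q m |m. m \<in> M \<and> m \<noteq> {}}"
    unfolding min_rank_def using RS_fin RS_ne by (rule Min_in)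
  then show ?thesis by auto
qed

lemma r_pos: "min_rank Q M > 0"
  using r_ex rank_pos[OF finQ] subM by metis

lemma K_ne: "m \<in> KK \<Longrightarrow> m \<noteq> {}"
  using r_pos rank_empty[of Q] unfolding KK_def by auto

lemma KM: "m \<in> KK \<Longrightarrow> m \<in> M" unfolding KK_def by auto
lemma K_rank: "m \<in> KK \<Longrightarrow> rel_rank Q m = min_rank Q M" unfolding KK_def by auto

lemma KI: "m \<in> M \<Longrightarrow> m \<noteq> {} \<Longrightarrow> rel_rank Q m \<le> min_rank Q M \<Longrightarrow> m \<in> KK"
  using r_min unfolding KK_def by (auto intro: antisym)

lemma rk1: "m \<in> M \<Longrightarrow> n \<in> M \<Longrightarrow> rel_rank Q (m O n) \<le> rel_rank Q m"
  using rank_comp1[OF finQ] subM by blast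
lemma rk2: "m \<in> M \<Longrightarrow> n \<in> M \<Longrightarrow> rel_rank Q (m O n) \<le> rel_rank Q n"
  using rank_comp2[OF finQ] subM by blast

context
  fixes m :: "('a \<times> 'a) set" and S :: "'b set" and c l
  assumes mK: "m \<in> KK" and finS: "finite S" and cardS: "card S \<le> min_rank Q M"
    and cS: "c \<subseteq> Q \<times> S" and lS: "l \<subseteq> S \<times> Q" and mcl: "m = c O l"
begin

lemma G_used: "\<sigma> \<in> S \<Longrightarrow> (\<exists>p. (p,\<sigma>) \<in> c) \<and> (\<exists>q. (\<sigma>,q) \<in> l)"
proof (rule ccontr)
  assume s: "\<sigma> \<in> S" and n: "\<not> ((\<exists>p. (p,\<sigma>) \<in> c) \<and> (\<exists>q. (\<sigma>,q) \<in> l))"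
  let ?S = "S - {\<sigma>}"
  have "m = (c \<inter> Q \<times> ?S) O (l \<inter> ?S \<times> Q)" using n mcl cS lS by blast
  then have "rel_rank Q m \<le> card ?S" using finS by (intro rank_le) auto
  also have "\<dots> < card S" using finS s by (rule card_Diff1_less)
  finally show False using cardS K_rank[OF mK] by simp
qed

lemma NN_sub: "A \<in> NN M c l \<Longrightarrow> A \<subseteq> S \<times> S"
  unfolding NN_def using cS lS by blast

lemma NN_comp: "A \<in> NN M c l \<Longrightarrow> B \<in> NN M c l \<Longrightarrow> A O B \<in> NN M c l"
proof -
  assume "A \<in> NN M c l" "B \<in> NN M c l"
  then obtain x y where xy: "x \<in> M" "y \<in> M" "A = l O x O c" "B = l O y O c" unfolding NN_def by blast
  have "A O B = l O (x O m O y) O c" using xy mcl by (simp add: O_assoc)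
  moreover have "x O m O y \<in> M" using xy mK KM compM by blast
  ultimately show "A O B \<in> NN M c l" unfolding NN_def by blast
qed

lemma NN_fin: "finite (NN M c l)"
proof -
  have "NN M c l \<subseteq> Pow (S \<times> S)" using NN_sub by blast
  then show ?thesis using finS by (meson finite_Pow_iff finite_SigmaI finite_subset)
qed

lemma NN_back: "x \<in> M \<Longrightarrow> c O (l O x O c) O l = m O x O m"
  using mcl by (simp add: O_assoc)

lemma NN_backM: "A \<in> NN M c l \<Longrightarrow> c O A O l \<in> M"
proof -
  assume "A \<in> NN M c l"
  then obtain x where "x \<in> M" "A = l O x O c" unfolding NN_def by blast
  then show ?thesis using NN_back[of x] mK KM compM by (simp add: O_assoc)
qed

lemma NN_ne: "A \<subseteq> S \<times> S \<Longrightarrow> A \<noteq> {} \<Longrightarrow> c O A O l \<noteq> {}"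
proof -
  assume "A \<subseteq> S \<times> S" "A \<noteq> {}"
  then obtain \<rho> \<sigma> where "(\<rho>,\<sigma>) \<in> A" "\<rho> \<in> S" "\<sigma> \<in> S" by auto
  then show ?thesis using G_used by blast
qed

lemma G_idem_diag:
  assumes A: "A \<in> NN M c l" and idem: "A O A = A" and ne: "A \<noteq> {}"
  shows "\<forall>\<rho>\<in>S. (\<rho>,\<rho>) \<in> A" "\<And>\<rho> \<sigma>. (\<rho>,\<sigma>) \<in> A \<Longrightarrow> (\<sigma>,\<rho>) \<in> A \<Longrightarrow> \<rho> = \<sigma>"
proof -
  have sub: "A \<subseteq> S \<times> S" using NN_sub[OF A] .
  have tr: "A O A \<subseteq> A" using idem by simp
  have "card (Gamma S A) \<ge> card S"
  proof -
    have finG: "finite (Gamma S A)" using Gamma_finite[OF finS sub tr] .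
    have "c O A O l = c O (cdec S A O ldec S A) O l"
      using dec_eq[OF finS sub idem] by (rule arg_cong[where f="\<lambda>Z. c O Z O l"])
    also have "\<dots> = (c O cdec S A) O (ldec S A O l)" by (simp add: O_assoc)
    finally have "c O A O l = (c O cdec S A) O (ldec S A O l)" .
    moreover have "c O cdec S A \<subseteq> Q \<times> Gamma S A" using dec_sub[OF sub] cS by blast
    moreover have "ldec S A O l \<subseteq> Gamma S A \<times> Q" using dec_sub[OF sub] lS by blast
    ultimately have "rel_rank Q (c O A O l) \<le> card (Gamma S A)"
      using finG by (intro rank_le) auto
    moreover have "min_rank Q M \<le> rel_rank Q (c O A O l)"
      using r_min NN_backM[OF A] NN_ne[OF sub ne] by blast
    ultimately show ?thesis using cardS by simp
  qed
  then have nb: "\<not> ((\<exists>\<rho>\<in>S. (\<rho>,\<rho>) \<notin> A) \<or> (\<exists>\<rho> \<sigma>. \<rho> \<noteq> \<sigma> \<and> (\<rho>,\<sigma>) \<in> A \<and> (\<sigma>,\<rho>) \<in> A))"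
    using card_Gamma_lt[OF finS sub tr] by (meson not_le)
  then show "\<forall>\<rho>\<in>S. (\<rho>,\<rho>) \<in> A" by blast
  show "\<And>\<rho> \<sigma>. (\<rho>,\<sigma>) \<in> A \<Longrightarrow> (\<sigma>,\<rho>) \<in> A \<Longrightarrow> \<rho> = \<sigma>" using nb by blast
qed

lemma G_trans: "\<rho> \<in> S \<Longrightarrow> \<sigma> \<in> S \<Longrightarrow> \<exists>B\<in>NN M c l. (\<rho>,\<sigma>) \<in> B"
proof -
  assume r: "\<rho> \<in> S" and s: "\<sigma> \<in> S"
  obtain q where q: "(\<rho>,q) \<in> l" using G_used[OF r] by blast
  obtain p where p: "(p,\<sigma>) \<in> c" using G_used[OF s] by blast
  have "q \<in> Q" "p \<in> Q" using q p cS lS by auto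
  then obtain x where x: "x \<in> M" "(q,p) \<in> x" using trans_ex by blast
  have "(\<rho>,\<sigma>) \<in> l O x O c" using q p x by blast
  then show ?thesis using x unfolding NN_def by blast
qed

lemma G_idem:
  assumes A: "A \<in> NN M c l" and idem: "A O A = A" and ne: "A \<noteq> {}"
  shows "A = Id_on S"
proof -
  have sub: "A \<subseteq> S \<times> S" using NN_sub[OF A] .
  note D = G_idem_diag[OF A idem ne]
  have "A \<subseteq> Id_on S"
  proof
    fix x assume x: "x \<in> A"
    then obtain \<rho> \<sigma> where rs: "x = (\<rho>,\<sigma>)" "\<rho> \<in> S" "\<sigma> \<in> S" using sub by auto
    show "x \<in> Id_on S"
    proof (rule ccontr)
      assume "x \<notin> Id_on S"
      then have ne': "\<rho> \<noteq> \<sigma>" using rs by auto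
      obtain B where B: "B \<in> NN M c l" "(\<sigma>,\<rho>) \<in> B" using G_trans[OF rs(3) rs(2)] by blast
      define Z where "Z = A O B O A"
      have ZN: "Z \<in> NN M c l" unfolding Z_def using A B NN_comp by blast
      have aa: "(\<rho>,\<rho>) \<in> A" "(\<sigma>,\<sigma>) \<in> A" using D(1) rs by auto
      have z: "(\<rho>,\<rho>) \<in> Z" "(\<rho>,\<sigma>) \<in> Z" "(\<sigma>,\<rho>) \<in> Z"
        unfolding Z_def using x rs aa B by blast+
      have zk: "(\<rho>,\<rho>) \<in> Z ^^ Suc k \<and> (\<rho>,\<sigma>) \<in> Z ^^ Suc k \<and> (\<sigma>,\<rho>) \<in> Z ^^ Suc k" for k
      proof (induction k)
        case 0 then show ?case using z by simp
      next
        case (Suc k) then show ?case using z by (meson relpow_Suc_I)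
      qed
      obtain j where j: "j > 0" "Z ^^ j \<in> NN M c l" "Z ^^ j O Z ^^ j = Z ^^ j"
        using idem_pow[OF NN_fin NN_comp ZN] by blast
      obtain k where "j = Suc k" using j(1) gr0_implies_Suc by blast
      then have "(\<rho>,\<sigma>) \<in> Z ^^ j" "(\<sigma>,\<rho>) \<in> Z ^^ j" using zk by auto
      then have "\<rho> = \<sigma>" using G_idem_diag(2)[OF j(2) j(3)] by blast
      then show False using ne' by simp
    qed
  qed
  moreover have "Id_on S \<subseteq> A" using D(1) by auto
  ultimately show ?thesis by blast
qed

lemma G_rinv:
  assumes A: "A \<in> NN M c l" and ne: "A \<noteq> {}"
  shows "\<exists>B\<in>NN M c l. A O B = Id_on S"
proof -
  obtain \<rho> \<sigma> where rs: "(\<rho>,\<sigma>) \<in> A" "\<rho> \<in> S" "\<sigma> \<in> S" using ne NN_sub[OF A] by auto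
  obtain B0 where B0: "B0 \<in> NN M c l" "(\<sigma>,\<rho>) \<in> B0" using G_trans[OF rs(3) rs(2)] by blast
  define C where "C = A O B0"
  have CN: "C \<in> NN M c l" unfolding C_def using A B0 NN_comp by blast
  have cc: "(\<rho>,\<rho>) \<in> C" unfolding C_def using rs B0 by blast
  obtain j where j: "j > 0" "C ^^ j \<in> NN M c l" "C ^^ j O C ^^ j = C ^^ j"
    using idem_pow[OF NN_fin NN_comp CN] by blast
  obtain k where k: "j = Suc k" using j(1) gr0_implies_Suc by blast
  have "(\<rho>,\<rho>) \<in> C ^^ j" using relpow_diag[OF cc] k by simp
  then have Cj: "C ^^ j = Id_on S" using G_idem[OF j(2) j(3)] by blast
  define Br where "Br = B0 O C ^^ (j + k)"
  have "C ^^ (j + k) = C ^^ Suc (k + k)" using k by simp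
  then have "C ^^ (j + k) \<in> NN M c l" using relpow_in[OF NN_comp CN] by simp
  then have BrN: "Br \<in> NN M c l" unfolding Br_def using B0 NN_comp by blast
  have "A O Br = C O C ^^ (j + k)" unfolding Br_def C_def by (simp add: O_assoc)
  also have "\<dots> = C ^^ (Suc (j + k))" by (simp add: relpow_commute)
  also have "\<dots> = C ^^ (j + j)" using k by simp
  also have "\<dots> = C ^^ j O C ^^ j" by (rule relpow_add)
  also have "\<dots> = Id_on S" using j(3) Cj by simp
  finally show ?thesis using BrN by blast
qed

lemma G_inv:
  assumes A: "A \<in> NN M c l" and ne: "A \<noteq> {}"
  shows "\<exists>B\<in>NN M c l. A O B = Id_on S \<and> B O A = Id_on S"
proof -
  obtain B where B: "B \<in> NN M c l" "A O B = Id_on S" using G_rinv[OF A ne] by blast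
  have Sne: "S \<noteq> {}" using ne NN_sub[OF A] by auto
  have "B \<noteq> {}" using B(2) Sne by auto
  then obtain B' where B': "B' \<in> NN M c l" "B O B' = Id_on S" using G_rinv[OF B(1)] by blast
  have "A = A O Id_on S" using Id_on_comp(1)[OF NN_sub[OF A]] by simp
  also have "\<dots> = (A O B) O B'" using B' by (simp add: O_assoc)
  also have "\<dots> = B'" using B(2) Id_on_comp(2)[OF NN_sub[OF B'(1)]] by simp
  finally have "B O A = Id_on S" using B' by simp
  then show ?thesis using B by blast
qed

lemma G_main:
  assumes x: "x \<in> M" and ne: "m O x O m \<noteq> {}"
  shows "\<exists>y\<in>M. m O x O m O y O m = m \<and> m O y O m O x O m = m"
proof -
  have AN: "l O x O c \<in> NN M c l" using x unfolding NN_def by blast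
  have "l O x O c \<noteq> {}" using ne NN_back[OF x] by auto
  then obtain B where B: "B \<in> NN M c l" "(l O x O c) O B = Id_on S" "B O (l O x O c) = Id_on S"
    using G_inv[OF AN] by blast
  obtain y where y: "y \<in> M" "B = l O y O c" using B(1) unfolding NN_def by blast
  have cId: "Id_on S O l = l" using Id_on_comp(2)[OF lS] .
  have "m O x O m O y O m = c O ((l O x O c) O B) O l" using mcl y by (simp add: O_assoc)
  also have "\<dots> = m" using B(2) cId mcl by simp
  finally have 1: "m O x O m O y O m = m" .
  have "m O y O m O x O m = c O (B O (l O x O c)) O l" using mcl y by (simp add: O_assoc)
  also have "\<dots> = m" using B(3) cId mcl by simp
  finally have 2: "m O y O m O x O m = m" .
  show ?thesis using 1 2 y by blast
qed

end


lemma K_main: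
  assumes mK: "m \<in> KK" and x: "x \<in> M" and ne: "m O x O m \<noteq> {}"
  shows "\<exists>y\<in>M. m O x O m O y O m = m \<and> m O y O m O x O m = m"
proof -
  obtain u v where uv: "u \<subseteq> Q \<times> {..<rel_rank Q m}" "v \<subseteq> {..<rel_rank Q m} \<times> Q" "m = u O v"
    using rank_ex[OF finQ subM[OF KM[OF mK]]] by blast
  have "card {..<rel_rank Q m} \<le> min_rank Q M" using K_rank[OF mK] by simp
  from G_main[OF mK _ this uv x ne] show ?thesis by simp
qed

lemma idem_ex: "\<exists>e\<in>KK. e O e = e"
proof -
  obtain m where m: "m \<in> M" "m \<noteq> {}" "rel_rank Q m = min_rank Q M" using r_ex by blast
  have mK: "m \<in> KK" using m unfolding KK_def by simp
  obtain p q where pq: "(p,q) \<in> m" using m(2) by auto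
  then have "p \<in> Q" "q \<in> Q" using subM[OF m(1)] by auto
  then obtain x where x: "x \<in> M" "(q,p) \<in> x" using trans_ex by blast
  have "m O x O m \<noteq> {}" using pq x by blast
  then obtain y where y: "y \<in> M" "m O x O m O y O m = m" using K_main[OF mK x(1)] by blast
  define e where "e = m O x O m O y"
  have eM: "e \<in> M" unfolding e_def using m x y compM by simp
  have "e O e = (m O x O m O y O m) O x O m O y" unfolding e_def by (simp add: O_assoc)
  then have idem: "e O e = e" using y(2) unfolding e_def by (simp add: O_assoc)
  have "e O m = m" using y(2) unfolding e_def by (simp add: O_assoc)
  then have "e \<noteq> {}" using m(2) by auto
  moreover have "rel_rank Q e \<le> min_rank Q M" unfolding e_def using rk1[OF m(1), of "x O m O y"] m x y compM by simp
  ultimately have "e \<in> KK" using KI eM by blast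
  then show ?thesis using idem by blast
qed

lemma D_eq:
  assumes eK: "e \<in> KK" and idem: "e O e = e"
  shows "KK = Dclass M e"
proof
  show "KK \<subseteq> Dclass M e"
  proof
    fix n assume nK: "n \<in> KK"
    have eM: "e \<in> M" and nM: "n \<in> M" using eK nK KM by auto
    obtain p q where pq: "(p,q) \<in> e" using K_ne[OF eK] by auto
    obtain p' q' where pq': "(p',q') \<in> n" using K_ne[OF nK] by auto
    have Q: "p \<in> Q" "q \<in> Q" "p' \<in> Q" "q' \<in> Q" using pq pq' subM eM nM by blast+
    obtain a where a: "a \<in> M" "(q,p') \<in> a" using trans_ex Q by blast
    obtain b where b: "b \<in> M" "(q',p) \<in> b" using trans_ex Q by blast
    define k where "k = e O a O n"
    have kM: "k \<in> M" unfolding k_def using eM a nM compM by simp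
    have "e O (a O n O b) O e \<noteq> {}" using pq pq' a b by blast
    then obtain y where y: "y \<in> M" "e O (a O n O b) O e O y O e = e"
      using K_main[OF eK, of "a O n O b"] a b nM compM by blast
    have R: "greenR M e k"
    proof -
      have "e = k O (b O e O y O e)" using y(2) unfolding k_def by (simp add: O_assoc)
      moreover have "b O e O y O e \<in> M" using b eM y compM by simp
      moreover have "a O n \<in> M" using a nM compM by simp
      ultimately show ?thesis unfolding greenR_def k_def by (auto simp: O_assoc)
    qed
    have "n O (b O e O a) O n \<noteq> {}" using pq pq' a b by blast
    then obtain y' where y': "y' \<in> M" "n O y' O n O (b O e O a) O n = n"
      using K_main[OF nK, of "b O e O a"] a b eM compM by blast
    have L: "greenL M k n"
    proof -
      have "n = (n O y' O n O b) O k" using y'(2) unfolding k_def by (simp add: O_assoc)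
      moreover have "n O y' O n O b \<in> M" using nM y' b compM by simp
      moreover have "e O a \<in> M" using a eM compM by simp
      moreover have "k = (e O a) O n" unfolding k_def by (simp add: O_assoc)
      ultimately show ?thesis unfolding greenL_def by blast
    qed
    show "n \<in> Dclass M e" unfolding Dclass_def greenD_def using nM kM R L by blast
  qed
next
  show "Dclass M e \<subseteq> KK"
  proof
    fix n assume "n \<in> Dclass M e"
    then obtain k x y x' y' where n: "n \<in> M" "k \<in> M" "x \<in> M" "y \<in> M" "x' \<in> M" "y' \<in> M"
      "e = k O x" "k = e O y" "k = x' O n" "n = y' O k"
      unfolding Dclass_def greenD_def greenR_def greenL_def by blast
    have eM: "e \<in> M" using eK KM by simp
    have "rel_rank Q n \<le> rel_rank Q k" using rk2[OF n(6) n(2)] n(10) by simp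
    also have "\<dots> \<le> rel_rank Q e" using rk1[OF eM n(4)] n(8) by simp
    also have "\<dots> = min_rank Q M" using K_rank[OF eK] .
    finally have "rel_rank Q n \<le> min_rank Q M" .
    moreover have "n \<noteq> {}" using K_ne[OF eK] n(7) n(9) by auto
    ultimately show "n \<in> KK" using KI n(1) by blast
  qed
qed


context
  fixes e assumes eK: "e \<in> KK" and eI: "e O e = e"
begin

lemma eM: "e \<in> M" using eK KM by simp
lemma e_sub: "e \<subseteq> Q \<times> Q" using subM eM by simp
lemma e_tr: "e O e \<subseteq> e" using eI by simp
lemma e_dec: "e = cdec Q e O ldec Q e" using dec_eq[OF finQ e_sub eI] .
lemma c_sub: "cdec Q e \<subseteq> Q \<times> Gamma Q e" using dec_sub[OF e_sub] by simp
lemma l_sub: "ldec Q e \<subseteq> Gamma Q e \<times> Q" using dec_sub[OF e_sub] by simp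
lemma finG: "finite (Gamma Q e)" using Gamma_finite[OF finQ e_sub e_tr] .

lemma card_G: "card (Gamma Q e) = min_rank Q M"
proof (rule antisym)
  obtain u v where uv: "u \<subseteq> Q \<times> {..<rel_rank Q e}" "v \<subseteq> {..<rel_rank Q e} \<times> Q" "e = u O v"
    using rank_ex[OF finQ e_sub] by blast
  have "card (Gamma Q e) \<le> card {..<rel_rank Q e}"
    using fooling[OF e_sub e_tr uv(3) uv(1)] by simp
  then show "card (Gamma Q e) \<le> min_rank Q M" using K_rank[OF eK] by simp
  have "rel_rank Q e \<le> card (Gamma Q e)" using rank_le[OF finG c_sub l_sub e_dec] .
  then show "min_rank Q M \<le> card (Gamma Q e)" using K_rank[OF eK] by simp
qed

lemmas eG = G_idem[OF eK finG _ c_sub l_sub e_dec] G_inv[OF eK finG _ c_sub l_sub e_dec]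
  G_trans[OF eK finG _ c_sub l_sub e_dec]

lemma eG_idem: "A \<in> NN M (cdec Q e) (ldec Q e) \<Longrightarrow> A O A = A \<Longrightarrow> A \<noteq> {} \<Longrightarrow> A = Id_on (Gamma Q e)"
  using eG(1) card_G by simp
lemma eG_inv: "A \<in> NN M (cdec Q e) (ldec Q e) \<Longrightarrow> A \<noteq> {} \<Longrightarrow>
   \<exists>B\<in>NN M (cdec Q e) (ldec Q e). A O B = Id_on (Gamma Q e) \<and> B O A = Id_on (Gamma Q e)"
  using eG(2) card_G by simp
lemma eG_trans: "\<rho> \<in> Gamma Q e \<Longrightarrow> \<sigma> \<in> Gamma Q e \<Longrightarrow> \<exists>B\<in>NN M (cdec Q e) (ldec Q e). (\<rho>,\<sigma>) \<in> B"
  using eG(3) card_G by simp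

lemma eIa: "e O e O X = e O X" using eI by (simp add: O_assoc[symmetric])

lemma H_char: "m \<in> Hclass M e \<longleftrightarrow> m \<in> M \<and> e O m = m \<and> m O e = m \<and> m \<noteq> {}"
proof
  assume "m \<in> Hclass M e"
  then obtain x y x' y' where h: "m \<in> M" "m = e O x" "e = m O y" "m = x' O e" "e = y' O m"
    unfolding Hclass_def greenR_def greenL_def by blast
  have "e O m = m" using h(2) by (simp add: eIa)
  moreover have "m O e = m" using h(4) eI by (simp add: O_assoc)
  moreover have "m \<noteq> {}" using h(3) K_ne[OF eK] by auto
  ultimately show "m \<in> M \<and> e O m = m \<and> m O e = m \<and> m \<noteq> {}" using h by blast
next
  assume h: "m \<in> M \<and> e O m = m \<and> m O e = m \<and> m \<noteq> {}"
  then have em: "e O m = m" and me: "m O e = m" by auto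
  have eme: "e O m O e = m" using em me by simp
  then have "e O m O e \<noteq> {}" using h by simp
  then obtain y where y: "y \<in> M" "e O m O e O y O e = e" "e O y O e O m O e = e"
    using K_main[OF eK] h by blast
  have "e O m O e O y O e = m O y O e" using em me by (simp add: O_assoc[symmetric])
  then have 1: "e = m O (y O e)" using y(2) by simp
  have "e O y O e O m O e = (e O y O e) O m" using em me by (simp add: O_assoc)
  then have 2: "e = (e O y O e) O m" using y(3) by simp
  have 3: "m = e O m" "m = m O e" using em me by simp_all
  have "y O e \<in> M" "e O y O e \<in> M" using y eM compM by auto
  then show "m \<in> Hclass M e" unfolding Hclass_def greenR_def greenL_def using h 1 2 3 eM by blast
qed

lemma eH: "e \<in> Hclass M e" using H_char eM eI K_ne[OF eK] by simp

lemma H_em: "m \<in> Hclass M e \<Longrightarrow> e O m = m" using H_char by auto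
lemma H_me: "m \<in> Hclass M e \<Longrightarrow> m O e = m" using H_char by auto
lemma H_eqs: "m \<in> Hclass M e \<Longrightarrow> e O m O e = m" using H_char by auto

lemma H_inv_ex: "m \<in> Hclass M e \<Longrightarrow> \<exists>n\<in>Hclass M e. m O n = e \<and> n O m = e"
proof -
  assume "m \<in> Hclass M e"
  then have h: "m \<in> M" "e O m = m" "m O e = m" "m \<noteq> {}" using H_char by auto
  then have "e O m O e \<noteq> {}" by simp
  then obtain y where y: "y \<in> M" "e O m O e O y O e = e" "e O y O e O m O e = e"
    using K_main[OF eK] h by blast
  define n where "n = e O y O e"
  have nM: "n \<in> M" unfolding n_def using y eM compM by simp
  have "e O m O e O y O e = m O n" unfolding n_def using h by (simp add: O_assoc[symmetric])
  then have 1: "m O n = e" using y(2) by simp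
  have "e O y O e O m O e = n O m" unfolding n_def using h by (simp add: O_assoc)
  then have 2: "n O m = e" using y(3) by simp
  have "e O n = n" "n O e = n" unfolding n_def using eI by (simp_all add: O_assoc eIa)
  moreover have "n \<noteq> {}" using 1 K_ne[OF eK] by auto
  ultimately have "n \<in> Hclass M e" using H_char nM by simp
  then show ?thesis using 1 2 by blast
qed

lemma hinv_props:
  assumes m: "m \<in> Hclass M e"
  shows "hinv M e m \<in> Hclass M e" "m O hinv M e m = e" "hinv M e m O m = e"
proof -
  have uniq: "n1 = n2" if "n1 \<in> Hclass M e" "n2 \<in> Hclass M e" "m O n1 = e" "n1 O m = e"
     "m O n2 = e" "n2 O m = e" for n1 n2
  proof -
    have "n1 = n1 O e" using that(1) H_char by simp
    also have "\<dots> = (n1 O m) O n2" using that(5) by (simp add: O_assoc)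
    also have "\<dots> = n2" using that(4) that(2) H_char by simp
    finally show ?thesis .
  qed
  obtain n where n: "n \<in> Hclass M e" "m O n = e" "n O m = e" using H_inv_ex[OF m] by blast
  have "hinv M e m = n" unfolding hinv_def
    by (rule the_equality) (use n uniq in blast)+
  then show "hinv M e m \<in> Hclass M e" "m O hinv M e m = e" "hinv M e m O m = e" using n by auto
qed

lemma H_comp: "m \<in> Hclass M e \<Longrightarrow> n \<in> Hclass M e \<Longrightarrow> m O n \<in> Hclass M e"
proof -
  assume m: "m \<in> Hclass M e" and n: "n \<in> Hclass M e"
  let ?mi = "hinv M e m" and ?ni = "hinv M e n"
  have "(m O n) O (?ni O ?mi) = m O (n O ?ni) O ?mi" by (simp add: O_assoc)
  also have "\<dots> = m O e O ?mi" using hinv_props(2)[OF n] by simp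
  also have "\<dots> = m O ?mi" using H_em[OF hinv_props(1)[OF m]] by simp
  also have "\<dots> = e" using hinv_props(2)[OF m] .
  finally have "m O n \<noteq> {}" using K_ne[OF eK] by auto
  moreover have "e O (m O n) = m O n" using H_em[OF m] by (simp add: O_assoc[symmetric])
  moreover have "(m O n) O e = m O n" using H_me[OF n] by (simp add: O_assoc)
  ultimately show ?thesis using m n H_char compM by auto
qed

lemma T_NN: "x \<in> M \<Longrightarrow> TT Q e x \<in> NN M (cdec Q e) (ldec Q e)"
  unfolding TT_def NN_def by blast

lemma T_sub: "TT Q e x \<subseteq> Gamma Q e \<times> Gamma Q e"
  unfolding TT_def using c_sub l_sub by blast

lemma T_mem:
  assumes m: "e O m O e = m" and r: "\<rho> \<in> Gamma Q e" and s: "\<sigma> \<in> Gamma Q e" and f: "f \<in> \<rho>" and g: "g \<in> \<sigma>"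
  shows "(\<rho>,\<sigma>) \<in> TT Q e m \<longleftrightarrow> (f,g) \<in> m"
proof -
  have "(\<rho>,\<sigma>) \<in> TT Q e m \<longleftrightarrow> (\<exists>q p. (\<rho>,q) \<in> ldec Q e \<and> (q,p) \<in> m \<and> (p,\<sigma>) \<in> cdec Q e)"
    unfolding TT_def by blast
  also have "\<dots> \<longleftrightarrow> (\<exists>q p. (f,q) \<in> e \<and> (q,p) \<in> m \<and> (p,g) \<in> e)"
    using dec_rep[OF e_sub e_tr r f] dec_rep[OF e_sub e_tr s g] by simp
  also have "\<dots> \<longleftrightarrow> (f,g) \<in> e O m O e" by blast
  finally show ?thesis using m by simp
qed

lemma e_exp: "ldec Q e O (e O X O e) O cdec Q e
   = (ldec Q e O cdec Q e) O (ldec Q e O X O cdec Q e) O (ldec Q e O cdec Q e)"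
proof -
  have "ldec Q e O (e O X O e) O cdec Q e
      = ldec Q e O ((cdec Q e O ldec Q e) O X O (cdec Q e O ldec Q e)) O cdec Q e"
    using e_dec by (rule arg_cong[where f="\<lambda>Z. ldec Q e O (Z O X O Z) O cdec Q e"])
  then show ?thesis by (simp add: O_assoc)
qed

lemma c_e_l: "cdec Q e O (ldec Q e O X O cdec Q e) O ldec Q e = e O X O e"
proof -
  have "e O X O e = (cdec Q e O ldec Q e) O X O (cdec Q e O ldec Q e)"
    using e_dec by (rule arg_cong[where f="\<lambda>Z. Z O X O Z"])
  then show ?thesis by (simp add: O_assoc)
qed

lemma T_hom: "m O e = m \<Longrightarrow> TT Q e (m O n) = TT Q e m O TT Q e n"
proof -
  assume me: "m O e = m"
  have "m O n = (m O e) O n" using me by simp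
  also have "\<dots> = (m O (cdec Q e O ldec Q e)) O n"
    using e_dec by (rule arg_cong[where f="\<lambda>Z. (m O Z) O n"])
  finally have "m O n = (m O (cdec Q e O ldec Q e)) O n" .
  then show ?thesis unfolding TT_def by (simp add: O_assoc)
qed

lemma T_e: "TT Q e e = Id_on (Gamma Q e)"
proof (rule eG_idem)
  show "TT Q e e \<in> NN M (cdec Q e) (ldec Q e)" using T_NN eM by simp
  show "TT Q e e O TT Q e e = TT Q e e" using T_hom[of e e] eI by simp
  have "cdec Q e O TT Q e e O ldec Q e = e O e O e" unfolding TT_def using c_e_l[of e] eI by simp
  then show "TT Q e e \<noteq> {}" using K_ne[OF eK] eI by auto
qed

lemma T_ne: "m \<in> Hclass M e \<Longrightarrow> TT Q e m \<noteq> {}"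
proof -
  assume m: "m \<in> Hclass M e"
  have "cdec Q e O TT Q e m O ldec Q e = e O m O e" unfolding TT_def using c_e_l[of m] by simp
  also have "\<dots> = m" using H_eqs[OF m] by simp
  finally show ?thesis using m H_char by auto
qed

lemma T_inv: "m \<in> Hclass M e \<Longrightarrow> TT Q e (hinv M e m) = converse (TT Q e m)"
proof -
  assume m: "m \<in> Hclass M e"
  note hp = hinv_props[OF m]
  have 1: "TT Q e m O TT Q e (hinv M e m) = Id_on (Gamma Q e)"
    using T_hom[of m "hinv M e m"] hp m H_char T_e by simp
  have 2: "TT Q e (hinv M e m) O TT Q e m = Id_on (Gamma Q e)"
    using T_hom[of "hinv M e m" m] hp H_char T_e by simp
  show ?thesis using inv_pair_conv[OF T_sub T_sub 1 2] .
qed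

lemma T_perm: "m \<in> Hclass M e \<Longrightarrow> perm_rel (Gamma Q e) (TT Q e m)"
proof -
  assume m: "m \<in> Hclass M e"
  note hp = hinv_props[OF m]
  have 1: "TT Q e m O TT Q e (hinv M e m) = Id_on (Gamma Q e)"
    using T_hom[of m "hinv M e m"] hp m H_char T_e by simp
  have 2: "TT Q e (hinv M e m) O TT Q e m = Id_on (Gamma Q e)"
    using T_hom[of "hinv M e m" m] hp H_char T_e by simp
  show ?thesis using inv_pair_perm[OF T_sub T_sub 1 2] .
qed

lemma H_eme: "m \<in> Hclass M e \<Longrightarrow> e O m O e = m"
  using H_eqs by simp

lemma gamma_T: "m \<in> Hclass M e \<Longrightarrow> gamma Q M e m = TT Q e m"
proof -
  assume m: "m \<in> Hclass M e"
  have mi: "hinv M e m \<in> Hclass M e" using hinv_props[OF m] by simp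
  show ?thesis
  proof (rule set_eqI)
    fix z :: "'a set \<times> 'a set"
    obtain \<rho> \<sigma> where z: "z = (\<rho>,\<sigma>)" by (cases z) auto
    show "z \<in> gamma Q M e m \<longleftrightarrow> z \<in> TT Q e m"
    proof
      assume "z \<in> gamma Q M e m"
      then obtain r s where rs: "\<rho> \<in> Gamma Q e" "\<sigma> \<in> Gamma Q e" "r \<in> \<rho>" "s \<in> \<sigma>" "(r,s) \<in> m"
        unfolding gamma_def z by blast
      then show "z \<in> TT Q e m" using T_mem[OF H_eme[OF m]] z by blast
    next
      assume zT: "z \<in> TT Q e m"
      then have rs: "\<rho> \<in> Gamma Q e" "\<sigma> \<in> Gamma Q e" using T_sub z by auto
      obtain r where r: "r \<in> \<rho>" using Gamma_props(1)[OF e_sub e_tr rs(1)] by auto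
      obtain s where s: "s \<in> \<sigma>" using Gamma_props(1)[OF e_sub e_tr rs(2)] by auto
      have "(r,s) \<in> m" using T_mem[OF H_eme[OF m] rs r s] zT z by simp
      moreover have "(\<sigma>,\<rho>) \<in> TT Q e (hinv M e m)" using T_inv[OF m] zT z by simp
      then have "(s,r) \<in> hinv M e m" using T_mem[OF H_eme[OF mi] rs(2) rs(1) s r] by simp
      ultimately show "z \<in> gamma Q M e m" unfolding gamma_def z using rs r s by blast
    qed
  qed
qed

lemma lc: "ldec Q e O cdec Q e = Id_on (Gamma Q e)"
proof -
  have "ldec Q e O cdec Q e = TT Q e e"
  proof (rule set_eqI)
    fix z :: "'a set \<times> 'a set"
    obtain \<rho> \<sigma> where z: "z = (\<rho>,\<sigma>)" by (cases z) auto
    show "z \<in> ldec Q e O cdec Q e \<longleftrightarrow> z \<in> TT Q e e"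
    proof
      assume zz: "z \<in> ldec Q e O cdec Q e"
      then have rs: "\<rho> \<in> Gamma Q e" "\<sigma> \<in> Gamma Q e" using z c_sub l_sub by auto
      obtain f where f: "f \<in> \<rho>" using Gamma_props(1)[OF e_sub e_tr rs(1)] by auto
      obtain g where g: "g \<in> \<sigma>" using Gamma_props(1)[OF e_sub e_tr rs(2)] by auto
      from zz obtain q where "(\<rho>,q) \<in> ldec Q e" "(q,\<sigma>) \<in> cdec Q e" using z by blast
      then have "(f,q) \<in> e" "(q,g) \<in> e" using dec_rep[OF e_sub e_tr rs(1) f] dec_rep[OF e_sub e_tr rs(2) g] by auto
      then have "(f,g) \<in> e" using eI by blast
      then show "z \<in> TT Q e e" using T_mem[of e, OF _ rs f g] eI z by (simp add: O_assoc)
    next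
      assume "z \<in> TT Q e e"
      then obtain q p where qp: "(\<rho>,q) \<in> ldec Q e" "(q,p) \<in> e" "(p,\<sigma>) \<in> cdec Q e"
        unfolding TT_def z by blast
      then obtain f where "f \<in> \<rho>" "(f,q) \<in> e" "\<rho> \<in> Gamma Q e" unfolding ldec_def by blast
      then have "(\<rho>,p) \<in> ldec Q e" using qp(2) e_tr unfolding ldec_def by blast
      then have "z \<in> ldec Q e O cdec Q e" using qp(3) z by blast
      then show "z \<in> ldec Q e O cdec Q e" by simp
    qed
  qed
  then show ?thesis using T_e by simp
qed

lemma T_sand: "TT Q e (e O x O e) = ldec Q e O x O cdec Q e"
proof -
  have "TT Q e (e O x O e) = (ldec Q e O cdec Q e) O (ldec Q e O x O cdec Q e) O (ldec Q e O cdec Q e)"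
    unfolding TT_def by (rule e_exp)
  also have "\<dots> = ldec Q e O x O cdec Q e" unfolding lc
    using Id_on_comp[of "ldec Q e O x O cdec Q e" "Gamma Q e" "Gamma Q e"] l_sub c_sub by blast
  finally show ?thesis .
qed


lemma Ggrp_eq: "Ggrp Q M e = TT Q e ` Hclass M e"
  unfolding Ggrp_def using gamma_T by (auto simp: image_def)

lemma H_sandI: "x \<in> M \<Longrightarrow> TT Q e (e O x O e) \<noteq> {} \<Longrightarrow> e O x O e \<in> Hclass M e"
proof -
  assume x: "x \<in> M" and ne: "TT Q e (e O x O e) \<noteq> {}"
  have "e O x O e \<in> M" using x eM compM by simp
  moreover have "e O (e O x O e) = e O x O e" by (simp add: eIa)
  moreover have "(e O x O e) O e = e O x O e" using eI by (simp add: O_assoc)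
  moreover have "e O x O e \<noteq> {}" using ne unfolding TT_def by auto
  ultimately show ?thesis using H_char by simp
qed

lemma H_trans: "\<rho> \<in> Gamma Q e \<Longrightarrow> \<sigma> \<in> Gamma Q e \<Longrightarrow> \<exists>m\<in>Hclass M e. (\<rho>,\<sigma>) \<in> TT Q e m"
proof -
  assume r: "\<rho> \<in> Gamma Q e" and s: "\<sigma> \<in> Gamma Q e"
  obtain B where B: "B \<in> NN M (cdec Q e) (ldec Q e)" "(\<rho>,\<sigma>) \<in> B" using eG_trans[OF r s] by blast
  obtain x where x: "x \<in> M" "B = ldec Q e O x O cdec Q e" using B(1) unfolding NN_def by blast
  have T: "TT Q e (e O x O e) = B" using T_sand x by simp
  then have "e O x O e \<in> Hclass M e" using H_sandI[OF x(1)] B(2) by auto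
  then show ?thesis using T B(2) by blast
qed

lemma tp_perm: "g \<in> TT Q e ` Hclass M e \<Longrightarrow> perm_rel (Gamma Q e) g"
  using T_perm by blast

lemma tp_comp: "g \<in> TT Q e ` Hclass M e \<Longrightarrow> h \<in> TT Q e ` Hclass M e \<Longrightarrow> g O h \<in> TT Q e ` Hclass M e"
proof -
  assume "g \<in> TT Q e ` Hclass M e" "h \<in> TT Q e ` Hclass M e"
  then obtain m n where mn: "m \<in> Hclass M e" "n \<in> Hclass M e" "g = TT Q e m" "h = TT Q e n" by blast
  have "TT Q e (m O n) = TT Q e m O TT Q e n" using T_hom[OF H_me[OF mn(1)]] .
  then have "g O h = TT Q e (m O n)" using mn(3,4) by simp
  moreover have "m O n \<in> Hclass M e" using H_comp[OF mn(1,2)] .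
  ultimately show ?thesis by blast
qed

lemma tp_conv: "g \<in> TT Q e ` Hclass M e \<Longrightarrow> converse g \<in> TT Q e ` Hclass M e"
proof -
  assume "g \<in> TT Q e ` Hclass M e"
  then obtain m where m: "m \<in> Hclass M e" "g = TT Q e m" by blast
  have "converse g = TT Q e (hinv M e m)" using T_inv[OF m(1)] m(2) by simp
  moreover have "hinv M e m \<in> Hclass M e" using hinv_props(1)[OF m(1)] .
  ultimately show ?thesis by blast
qed

lemma tp_trans: "\<rho> \<in> Gamma Q e \<Longrightarrow> \<sigma> \<in> Gamma Q e \<Longrightarrow> \<exists>g\<in>TT Q e ` Hclass M e. (\<rho>,\<sigma>) \<in> g"
proof -
  assume "\<rho> \<in> Gamma Q e" "\<sigma> \<in> Gamma Q e"
  then obtain m where "m \<in> Hclass M e" "(\<rho>,\<sigma>) \<in> TT Q e m" using H_trans by blast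
  then show ?thesis by blast
qed

lemma trans_perm: "transitive_perm_group (Gamma Q e) (Ggrp Q M e)"
proof -
  let ?G = "TT Q e ` Hclass M e"
  have ne: "?G \<noteq> {}" using eH by blast
  have 1: "\<forall>g\<in>?G. perm_rel (Gamma Q e) g" using tp_perm by (intro ballI)
  have 2: "\<forall>g\<in>?G. \<forall>h\<in>?G. g O h \<in> ?G" using tp_comp by (intro ballI)
  have 3: "\<forall>g\<in>?G. converse g \<in> ?G" using tp_conv by (intro ballI)
  have 4: "\<forall>s\<in>Gamma Q e. \<forall>t\<in>Gamma Q e. \<exists>g\<in>?G. (s,t) \<in> g" using tp_trans by (intro ballI)
  have "perm_group_rel (Gamma Q e) ?G" unfolding perm_group_rel_def using ne 1 2 3 by (intro conjI)
  then show ?thesis unfolding transitive_perm_group_def Ggrp_eq using 4 by (intro conjI)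
qed

lemma finH: "finite (Hclass M e)"
  using finM unfolding Hclass_def by simp

context
  fixes i assumes iQ: "i \<in> Q" and ii: "(i,i) \<in> e"
begin

definition "ri = clsof e i"
definition "Si = {m \<in> Hclass M e. (i,i) \<in> m}"
definition "phi m = (THE \<sigma>. (ri,\<sigma>) \<in> TT Q e m)"

lemma ri: "ri \<in> Gamma Q e" "i \<in> ri"
  unfolding ri_def using Gamma_memI[OF e_sub e_tr ii] clsof_self[OF ii] by auto

lemma Si_T: "m \<in> Hclass M e \<Longrightarrow> (i,i) \<in> m \<longleftrightarrow> (ri,ri) \<in> TT Q e m"
  using T_mem[OF H_eme ri(1) ri(1) ri(2) ri(2)] by simp

lemma phi: "m \<in> Hclass M e \<Longrightarrow> (ri, \<sigma>) \<in> TT Q e m \<longleftrightarrow> \<sigma> = phi m"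
proof -
  assume m: "m \<in> Hclass M e"
  have "\<forall>x\<in>Gamma Q e. \<exists>!y. (x,y) \<in> TT Q e m" using T_perm[OF m] unfolding perm_rel_def by (elim conjE)
  then have "\<exists>!\<sigma>. (ri,\<sigma>) \<in> TT Q e m" using ri(1) by (rule bspec)
  then obtain t0 where t0: "(ri,t0) \<in> TT Q e m" "\<And>t'. (ri,t') \<in> TT Q e m \<Longrightarrow> t' = t0" by blast
  have th: "phi m = t0" unfolding phi_def using t0 by (rule the_equality)
  show ?thesis
  proof
    assume "(ri, \<sigma>) \<in> TT Q e m"
    then have "\<sigma> = t0" by (rule t0(2))
    then show "\<sigma> = phi m" using th by simp
  next
    assume "\<sigma> = phi m"
    then show "(ri, \<sigma>) \<in> TT Q e m" using th t0(1) by simp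
  qed
qed

lemma phi_in: "m \<in> Hclass M e \<Longrightarrow> phi m \<in> Gamma Q e"
  using phi[of m "phi m"] T_sub by blast

lemma eSi: "e \<in> Si" unfolding Si_def using eH ii by simp

lemma coset_sub:
  assumes m: "m \<in> Hclass M e" and m': "m' \<in> Hclass M e" and eq: "phi m = phi m'"
  shows "(\<lambda>s. s O m) ` Si \<subseteq> (\<lambda>s. s O m') ` Si"
proof
  fix x assume "x \<in> (\<lambda>s. s O m) ` Si"
  then obtain s where s: "s \<in> Si" "x = s O m" by blast
  have sH: "s \<in> Hclass M e" using s unfolding Si_def by simp
  define hm where "hm = hinv M e m'"
  have hmH: "hm \<in> Hclass M e" unfolding hm_def using hinv_props(1)[OF m'] .
  define t where "t = s O m O hm"
  have tH: "t \<in> Hclass M e" unfolding t_def using H_comp sH m hmH by simp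
  have Tt: "TT Q e t = TT Q e s O TT Q e m O TT Q e hm"
    unfolding t_def using T_hom H_me sH m by simp
  have 1: "(ri,ri) \<in> TT Q e s" using Si_T sH s unfolding Si_def by simp
  have 2: "(ri, phi m) \<in> TT Q e m" using phi[OF m] by simp
  have 3: "(phi m, ri) \<in> TT Q e hm" unfolding hm_def using T_inv[OF m'] phi[OF m'] eq by simp
  have "(ri,ri) \<in> TT Q e s O TT Q e m O TT Q e hm" using 1 2 3 by blast
  then have "(ri,ri) \<in> TT Q e t" using Tt by simp
  then have tS: "t \<in> Si" using Si_T tH unfolding Si_def by simp
  have "t O m' = s O m O (hm O m')" unfolding t_def by (simp add: O_assoc)
  also have "\<dots> = s O m" unfolding hm_def using hinv_props(3)[OF m'] H_me[OF m] by (simp add: O_assoc[symmetric])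
  finally show "x \<in> (\<lambda>s. s O m') ` Si" using tS s by blast
qed

lemma coset_eq:
  assumes m: "m \<in> Hclass M e" and m': "m' \<in> Hclass M e"
  shows "(\<lambda>s. s O m) ` Si = (\<lambda>s. s O m') ` Si \<longleftrightarrow> phi m = phi m'"
proof
  assume eq: "(\<lambda>s. s O m) ` Si = (\<lambda>s. s O m') ` Si"
  have "m' = e O m'" using H_em[OF m'] by simp
  then have "m' \<in> (\<lambda>s. s O m) ` Si" using eq eSi by blast
  then obtain s where s: "s \<in> Si" "m' = s O m" by blast
  have sH: "s \<in> Hclass M e" using s unfolding Si_def by simp
  have Tm: "TT Q e m' = TT Q e s O TT Q e m" using s T_hom H_me[OF sH] by simp
  have 1: "(ri,ri) \<in> TT Q e s" using Si_T sH s unfolding Si_def by simp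
  have 2: "(ri, phi m) \<in> TT Q e m" using phi[OF m] by simp
  have "(ri, phi m) \<in> TT Q e s O TT Q e m" using 1 2 by blast
  then have "(ri, phi m) \<in> TT Q e m'" using Tm by simp
  then show "phi m = phi m'" using phi[OF m'] by simp
next
  assume "phi m = phi m'"
  then show "(\<lambda>s. s O m) ` Si = (\<lambda>s. s O m') ` Si"
    using coset_sub[OF m m'] coset_sub[OF m' m] by (simp add: subset_antisym)
qed

lemma phi_img: "phi ` Hclass M e = Gamma Q e"
proof
  show "phi ` Hclass M e \<subseteq> Gamma Q e" using phi_in by blast
  show "Gamma Q e \<subseteq> phi ` Hclass M e"
  proof
    fix \<sigma> assume "\<sigma> \<in> Gamma Q e"
    then obtain m where "m \<in> Hclass M e" "(ri,\<sigma>) \<in> TT Q e m" using H_trans ri(1) by blast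
    then show "\<sigma> \<in> phi ` Hclass M e" using phi by blast
  qed
qed

lemma index_eq: "min_rank Q M = grp_index (Hclass M e) {m \<in> Hclass M e. (i,i) \<in> m}"
proof -
  have "grp_index (Hclass M e) {m \<in> Hclass M e. (i,i) \<in> m}
      = card ((\<lambda>m. (\<lambda>s. s O m) ` Si) ` Hclass M e)"
    unfolding grp_index_def Si_def by simp
  also have "\<dots> = card (phi ` Hclass M e)"
    by (rule card_image_kernel[OF finH coset_eq])
  also have "\<dots> = card (Gamma Q e)" by (simp only: phi_img)
  finally show ?thesis using card_G by simp
qed

end

end

end

context tmon begin

lemma conj_ex:
  assumes eK: "e \<in> KK" and eI: "e O e = e" and fK: "f \<in> KK" and fI: "f O f = f"
  shows "\<exists>x y. x \<in> M \<and> y \<in> M \<and> e O x = x \<and> x O f = x \<and> f O y = y \<and> y O e = y \<and> x O y = e \<and> y O x = f"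
proof -
  obtain p q where "(p,q) \<in> e" using K_ne[OF eK] by auto
  then obtain h where h: "(h,h) \<in> e" using idem_fix[OF finQ e_sub[OF eK eI] eI] by blast
  obtain p' q' where "(p',q') \<in> f" using K_ne[OF fK] by auto
  then obtain g where g: "(g,g) \<in> f" using idem_fix[OF finQ e_sub[OF fK fI] fI] by blast
  have hg: "h \<in> Q" "g \<in> Q" using h g e_sub[OF eK eI] e_sub[OF fK fI] by auto
  obtain b where b: "b \<in> M" "(h,g) \<in> b" using trans_ex hg by blast
  obtain b' where b': "b' \<in> M" "(g,h) \<in> b'" using trans_ex hg by blast
  have eM: "e \<in> M" and fM: "f \<in> M" using eK fK KM by auto
  define x where "x = e O b O f"
  define y0 where "y0 = f O b' O e"
  define u where "u = x O y0"
  have xM: "x \<in> M" unfolding x_def using eM fM b compM by simp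
  have y0M: "y0 \<in> M" unfolding y0_def using eM fM b' compM by simp
  have uM: "u \<in> M" unfolding u_def using xM y0M compM by simp
  have "(h,h) \<in> u" unfolding u_def x_def y0_def using h g b b' by blast
  then have une: "u \<noteq> {}" by auto
  have eIa': "e O e O X = e O X" for X using eI by (simp add: O_assoc[symmetric])
  have fIa': "f O f O X = f O X" for X using fI by (simp add: O_assoc[symmetric])
  have eu: "e O u = u" unfolding u_def x_def by (simp add: O_assoc eIa')
  have ue: "u O e = u" unfolding u_def x_def y0_def using eI by (simp add: O_assoc)
  have uH: "u \<in> Hclass M e" using H_char[OF eK eI] uM eu ue une by simp
  define ui where "ui = hinv M e u"
  note hp = hinv_props[OF eK eI uH]
  have uiH: "ui \<in> Hclass M e" unfolding ui_def using hp(1) .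
  define y where "y = y0 O ui"
  have "ui \<in> M" using uiH unfolding Hclass_def by simp
  then have yM: "y \<in> M" unfolding y_def using y0M compM by simp
  have ex: "e O x = x" unfolding x_def by (simp add: eIa')
  have xf: "x O f = x" unfolding x_def using fI by (simp add: O_assoc)
  have fy: "f O y = y" unfolding y_def y0_def by (simp add: O_assoc fIa')
  have ye: "y O e = y" unfolding y_def using H_me[OF eK eI uiH] by (simp add: O_assoc)
  have xy: "x O y = e" unfolding y_def using hp(2) unfolding u_def ui_def by (simp add: O_assoc)
  define v where "v = y O x"
  have vM: "v \<in> M" unfolding v_def using yM xM compM by simp
  have fv: "f O v = v" unfolding v_def using fy by (simp add: O_assoc[symmetric])
  have vf: "v O f = v" unfolding v_def using xf by (simp add: O_assoc)
  have vv: "v O v = v"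
  proof -
    have "v O v = y O (x O y) O x" unfolding v_def by (simp add: O_assoc)
    also have "\<dots> = (y O e) O x" using xy by (simp add: O_assoc)
    also have "\<dots> = v" unfolding v_def using ye by simp
    finally show ?thesis .
  qed
  have "x O v O y = (x O y) O (x O y)" unfolding v_def by (simp add: O_assoc)
  also have "\<dots> = e" using xy eI by simp
  finally have "v \<noteq> {}" using K_ne[OF eK] by auto
  then have vH: "v \<in> Hclass M f" using H_char[OF fK fI] vM fv vf by simp
  note vp = hinv_props[OF fK fI vH]
  have "v = v O (v O hinv M f v)" using vf vp(2) by simp
  also have "\<dots> = (v O v) O hinv M f v" by (simp add: O_assoc)
  also have "\<dots> = f" using vv vp(2) by simp
  finally have "y O x = f" unfolding v_def .
  then show ?thesis using xM yM ex xf fy ye xy by blast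
qed


lemma equiv_groups:
  assumes eK: "e \<in> KK" and eI: "e O e = e" and fK: "f \<in> KK" and fI: "f O f = f"
  shows "equivalent_perm_groups (Gamma Q e) (Ggrp Q M e) (Gamma Q f) (Ggrp Q M f)"
proof -
  obtain x y where xy: "x \<in> M" "y \<in> M" "e O x = x" "x O f = x" "f O y = y" "y O e = y" "x O y = e" "y O x = f"
    using conj_ex[OF eK eI fK fI] by blast
  let ?Ge = "Gamma Q e" and ?Gf = "Gamma Q f"
  let ?le = "ldec Q e" and ?ce = "cdec Q e" and ?lf = "ldec Q f" and ?cf = "cdec Q f"
  define P' where "P' = ?le O x O ?cf"
  define P where "P = ?lf O y O ?ce"
  have P'sub: "P' \<subseteq> ?Ge \<times> ?Gf" unfolding P'_def using l_sub[OF eK eI] c_sub[OF fK fI] by blast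
  have Psub: "P \<subseteq> ?Gf \<times> ?Ge" unfolding P_def using l_sub[OF fK fI] c_sub[OF eK eI] by blast
  have cle: "?ce O ?le = e" using e_dec[OF eK eI] by (rule sym)
  have clf: "?cf O ?lf = f" using e_dec[OF fK fI] by (rule sym)
  have P'P: "P' O P = Id_on ?Ge"
  proof -
    have "P' O P = ?le O x O (?cf O ?lf) O y O ?ce" unfolding P'_def P_def by (simp add: O_assoc)
    also have "\<dots> = ?le O (x O f) O y O ?ce" using clf by (simp add: O_assoc)
    also have "\<dots> = ?le O (x O y) O ?ce" using xy(4) by (simp add: O_assoc)
    also have "\<dots> = TT Q e e" unfolding TT_def using xy(7) by simp
    also have "\<dots> = Id_on ?Ge" using T_e[OF eK eI] .
    finally show ?thesis .
  qed
  have PP': "P O P' = Id_on ?Gf"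
  proof -
    have "P O P' = ?lf O y O (?ce O ?le) O x O ?cf" unfolding P'_def P_def by (simp add: O_assoc)
    also have "\<dots> = ?lf O (y O e) O x O ?cf" using cle by (simp add: O_assoc)
    also have "\<dots> = ?lf O (y O x) O ?cf" using xy(6) by (simp add: O_assoc)
    also have "\<dots> = TT Q f f" unfolding TT_def using xy(8) by simp
    also have "\<dots> = Id_on ?Gf" using T_e[OF fK fI] .
    finally show ?thesis .
  qed
  define \<theta> where "\<theta> = (\<lambda>s. THE t. (s,t) \<in> P')"
  have bij\<theta>: "bij_betw \<theta> ?Ge ?Gf" unfolding \<theta>_def using bij_from_pair(1)[OF P'sub Psub P'P PP'] .
  have ch: "\<And>s t. s \<in> ?Ge \<Longrightarrow> (s,t) \<in> P' \<longleftrightarrow> t = \<theta> s"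
    unfolding \<theta>_def using bij_from_pair(2)[OF P'sub Psub P'P PP'] by blast
  have Pc: "P = converse P'" using inv_pair_conv[OF P'sub Psub P'P PP'] .
  have inj\<theta>: "inj_on \<theta> ?Ge" using bij\<theta> unfolding bij_betw_def by simp
  define \<alpha> where "\<alpha> = (\<lambda>g. P O g O P')"
  let ?He = "Hclass M e" and ?Hf = "Hclass M f"
  have Ge: "Ggrp Q M e = TT Q e ` ?He" using Ggrp_eq[OF eK eI] .
  have Gf: "Ggrp Q M f = TT Q f ` ?Hf" using Ggrp_eq[OF fK fI] .
  have gsub: "g \<subseteq> ?Ge \<times> ?Ge" if "g \<in> TT Q e ` ?He" for g using that T_sub[OF eK eI] by blast
  have backg: "P' O \<alpha> g O P = g" if "g \<in> TT Q e ` ?He" for g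
  proof -
    have "P' O \<alpha> g O P = (P' O P) O g O (P' O P)" unfolding \<alpha>_def by (simp add: O_assoc)
    also have "\<dots> = g" using P'P Id_on_comp[OF gsub[OF that]] by simp
    finally show ?thesis .
  qed
  have img: "\<alpha> (TT Q e m) = TT Q f (y O m O x)" if m: "m \<in> ?He" for m
  proof -
    have "\<alpha> (TT Q e m) = ?lf O y O (?ce O (?le O m O ?ce) O ?le) O x O ?cf"
      unfolding \<alpha>_def P_def P'_def TT_def by (simp add: O_assoc)
    also have "\<dots> = ?lf O y O (e O m O e) O x O ?cf" using c_e_l[OF eK eI, of m] by simp
    also have "\<dots> = ?lf O y O m O x O ?cf" using H_eme[OF eK eI m] by simp
    also have "\<dots> = TT Q f (y O m O x)" unfolding TT_def by (simp add: O_assoc)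
    finally show ?thesis .
  qed
  have conjH: "y O m O x \<in> ?Hf" if m: "m \<in> ?He" for m
  proof -
    have mM: "m \<in> M" using m unfolding Hclass_def by simp
    have "x O (y O m O x) O y = (x O y) O m O (x O y)" by (simp add: O_assoc)
    also have "\<dots> = m" using xy(7) H_eme[OF eK eI m] by simp
    finally have "y O m O x \<noteq> {}" using H_char[OF eK eI] m by auto
    moreover have "f O (y O m O x) = y O m O x" using xy(5) by (simp add: O_assoc[symmetric])
    moreover have "(y O m O x) O f = y O m O x" using xy(4) by (simp add: O_assoc)
    moreover have "y O m O x \<in> M" using xy mM compM by simp
    ultimately show ?thesis using H_char[OF fK fI] by simp
  qed
  have bij\<alpha>: "bij_betw \<alpha> (TT Q e ` ?He) (TT Q f ` ?Hf)"
    unfolding bij_betw_def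
  proof
    show "inj_on \<alpha> (TT Q e ` ?He)"
    proof (rule inj_onI)
      fix g h assume g: "g \<in> TT Q e ` ?He" and h: "h \<in> TT Q e ` ?He" and eq: "\<alpha> g = \<alpha> h"
      have "g = P' O \<alpha> g O P" using backg[OF g] by simp
      also have "\<dots> = P' O \<alpha> h O P" using eq by simp
      also have "\<dots> = h" using backg[OF h] .
      finally show "g = h" .
    qed
    show "\<alpha> ` TT Q e ` ?He = TT Q f ` ?Hf"
    proof
      show "\<alpha> ` TT Q e ` ?He \<subseteq> TT Q f ` ?Hf"
      proof
        fix z assume "z \<in> \<alpha> ` TT Q e ` ?He"
        then obtain m where m: "m \<in> ?He" "z = \<alpha> (TT Q e m)" by blast
        then show "z \<in> TT Q f ` ?Hf" using img[OF m(1)] conjH[OF m(1)] by blast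
      qed
      show "TT Q f ` ?Hf \<subseteq> \<alpha> ` TT Q e ` ?He"
      proof
        fix z assume "z \<in> TT Q f ` ?Hf"
        then obtain n where n: "n \<in> ?Hf" "z = TT Q f n" by blast
        define m where "m = x O n O y"
        have nM: "n \<in> M" using n unfolding Hclass_def by simp
        have "y O m O x = (y O x) O n O (y O x)" unfolding m_def by (simp add: O_assoc)
        also have "\<dots> = n" using xy(8) H_eme[OF fK fI n(1)] by simp
        finally have ymx: "y O m O x = n" .
        have "m \<noteq> {}" using ymx H_char[OF fK fI] n(1) by auto
        moreover have "e O m = m" unfolding m_def using xy(3) by (simp add: O_assoc[symmetric])
        moreover have "m O e = m" unfolding m_def using xy(6) by (simp add: O_assoc)
        moreover have "m \<in> M" unfolding m_def using xy nM compM by simp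
        ultimately have mH: "m \<in> ?He" using H_char[OF eK eI] by simp
        have "\<alpha> (TT Q e m) = z" using img[OF mH] ymx n(2) by simp
        then show "z \<in> \<alpha> ` TT Q e ` ?He" using mH by blast
      qed
    qed
  qed
  have hom: "\<alpha> (g O h) = \<alpha> g O \<alpha> h" if g: "g \<in> TT Q e ` ?He" and h: "h \<in> TT Q e ` ?He" for g h
  proof -
    have "\<alpha> g O \<alpha> h = P O g O (P' O P) O h O P'" unfolding \<alpha>_def by (simp add: O_assoc)
    also have "\<dots> = P O (g O Id_on ?Ge) O h O P'" using P'P by (simp add: O_assoc)
    also have "\<dots> = \<alpha> (g O h)" unfolding \<alpha>_def using Id_on_comp(1)[OF gsub[OF g]] by (simp add: O_assoc)
    finally show ?thesis by simp
  qed
  have compat: "(s,t) \<in> g \<longleftrightarrow> (\<theta> s, \<theta> t) \<in> \<alpha> g"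
    if g: "g \<in> TT Q e ` ?He" and s: "s \<in> ?Ge" and t: "t \<in> ?Ge" for g s t
  proof
    assume st: "(s,t) \<in> g"
    have "(s, \<theta> s) \<in> P'" "(t, \<theta> t) \<in> P'" using ch s t by auto
    then have "(\<theta> s, s) \<in> P" "(t, \<theta> t) \<in> P'" using Pc by auto
    then show "(\<theta> s, \<theta> t) \<in> \<alpha> g" unfolding \<alpha>_def using st by blast
  next
    assume "(\<theta> s, \<theta> t) \<in> \<alpha> g"
    then obtain a b where ab: "(\<theta> s, a) \<in> P" "(a,b) \<in> g" "(b, \<theta> t) \<in> P'" unfolding \<alpha>_def by blast
    have abG: "a \<in> ?Ge" "b \<in> ?Ge" using ab(2) gsub[OF g] by auto
    have "(a, \<theta> s) \<in> P'" using ab(1) Pc by auto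
    then have "\<theta> s = \<theta> a" using ch[OF abG(1)] by simp
    then have as: "a = s" using inj\<theta> abG(1) s by (auto dest: inj_onD)
    have "\<theta> t = \<theta> b" using ch[OF abG(2)] ab(3) by simp
    then have bt: "b = t" using inj\<theta> abG(2) t by (auto dest: inj_onD)
    show "(s,t) \<in> g" using ab(2) as bt by simp
  qed
  have hom': "\<forall>g\<in>TT Q e ` ?He. \<forall>h\<in>TT Q e ` ?He. \<alpha> (g O h) = \<alpha> g O \<alpha> h"
    using hom by (intro ballI)
  have compat': "\<forall>g\<in>TT Q e ` ?He. \<forall>s\<in>?Ge. \<forall>t\<in>?Ge. (s,t) \<in> g \<longleftrightarrow> (\<theta> s, \<theta> t) \<in> \<alpha> g"
    using compat by (intro ballI)
  show ?thesis unfolding equivalent_perm_groups_def Ge Gf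
    by (rule exI[of _ \<theta>], rule exI[of _ \<alpha>]) (intro conjI bij\<theta> bij\<alpha> hom' compat')
qed

end

theorem mainTheorem10:
  fixes Q :: "'a set" and M :: "('a \<times> 'a) set set" and K :: "('a \<times> 'a) set set"
  assumes "finite Q" and "Q \<noteq> {}"
    and "rel_monoid Q M" and "transitive_rel_monoid Q M"
    and K_def: "K = {m \<in> M. rel_rank Q m = min_rank Q M}"
  shows "(\<exists>m\<in>M. K = Dclass M m) \<and> (\<exists>e\<in>K. idempotent e)
    \<and> (\<forall>e\<in>K. idempotent e \<longrightarrow> transitive_perm_group (Gamma Q e) (Ggrp Q M e))
    \<and> (\<forall>e\<in>K. \<forall>f\<in>K. idempotent e \<and> idempotent f \<longrightarrow>
          equivalent_perm_groups (Gamma Q e) (Ggrp Q M e) (Gamma Q f) (Ggrp Q M f))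
    \<and> (\<forall>e\<in>K. idempotent e \<longrightarrow> (\<forall>i\<in>Q. (i, i) \<in> e \<longrightarrow>
          min_rank Q M = grp_index (Hclass M e) {m \<in> Hclass M e. (i, i) \<in> m}))"
proof -
  interpret tmon Q M using assms(1-4) by unfold_locales
  have KK: "K = KK" using K_def unfolding KK_def by simp
  obtain e where e: "e \<in> KK" "e O e = e" using idem_ex by blast
  have 1: "\<exists>m\<in>M. K = Dclass M m" using D_eq[OF e] KM[OF e(1)] KK by blast
  have 2: "\<exists>e\<in>K. idempotent e" using e KK unfolding idempotent_def by blast
  have 3: "\<forall>e\<in>K. idempotent e \<longrightarrow> transitive_perm_group (Gamma Q e) (Ggrp Q M e)"
    using trans_perm KK unfolding idempotent_def by blast
  have 4: "\<forall>e\<in>K. \<forall>f\<in>K. idempotent e \<and> idempotent f \<longrightarrow>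
          equivalent_perm_groups (Gamma Q e) (Ggrp Q M e) (Gamma Q f) (Ggrp Q M f)"
    using equiv_groups KK unfolding idempotent_def by blast
  have 5: "\<forall>e\<in>K. idempotent e \<longrightarrow> (\<forall>i\<in>Q. (i, i) \<in> e \<longrightarrow>
          min_rank Q M = grp_index (Hclass M e) {m \<in> Hclass M e. (i, i) \<in> m})"
    using index_eq KK unfolding idempotent_def by blast
  show ?thesis using 1 2 3 4 5 by blast
qed

end
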